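(* Assume $\mathbb{E}\bigl(|h(\theta)|\bigr)<\infty$ and that $S$ satisfies Assumption A at $s^*$. Then, for $f_S$-almost all $s^*\in\mathbb{R}^q$, $$\mathrm{bias}(Y^{(\delta)}_n)=C(s^* )\,\delta^2+O(\delta^3)\quad\text{as }\delta\downarrow0,$$ where $C(s^* )=\dfrac{\Delta\phi_h(s^* )-y\,\Delta\phi_1(s^* )}{2(q+2)\,\phi_1(s^* )}$ and $\Delta$ is the Laplace operator.
   Context: Let $p,q\ge1$, $h\colon\mathbb{R}^p\to\mathbb{R}$ measurable. Let $(\theta,S)$ be a random vector in $\mathbb{R}^p\times\mathbb{R}^q$ with joint Lebesgue density $f_{S,\theta}(s,t)$, marginal $f_S(s)=\int f_{S,\theta}(s,t)\,dt$, and conditional density $f_{\theta|S}(t\mid s)=f_{S,\theta}(s,t)/f_S(s)$ if $f_S(s)>0$, $0$ otherwise; $y=\mathbb{E}(h(\theta)\mid S=s^* )$ computed with this density. ABC algorithm: given $s^*$, $\delta>0$, $n\in\mathbb{N}$, repeatedly draw independent pairs $(\theta,S)$ from the joint distribution, accepting $\theta$ whenever $\|S-s^*\|\le\delta$ (Euclidean norm), until $n$ values $\theta^{(\delta)}_1,\dots,\theta^{(\delta)}_n$ are accepted; $Y^{(\delta)}_n=\frac1n\sum_{j=1}^n h(\theta^{(\delta)}_j)$ and $\mathrm{bias}(Y^{(\delta)}_n)=\mathbb{E}(Y^{(\delta)}_n)-y$. Define $\phi_h(s)=\int_{\mathbb{R}^p}h(t)f_{S,\theta}(s,t)\,dt$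 and $\phi_1=f_S$. Assumption A: $f_S$ and $\phi_h$ are three times continuously differentiable in a neighbourhood of $s^*$. *)

theory Defs
  imports "HOL-Probability.Probability" "HOL-Library.Landau_Symbols"
begin

text \<open>Iterated partial derivatives along a list of directions (applied right to left):
  pd f [v1,...,vk] = partial_{v1} ... partial_{vk} f.\<close>
fun pd :: "('b::euclidean_space \<Rightarrow> real) \<Rightarrow> 'b list \<Rightarrow> 'b \<Rightarrow> real" where
  "pd f [] = f"
| "pd f (v # vs) = (\<lambda>x. deriv (\<lambda>t. pd f vs (x + t *\<^sub>R v)) 0)"

definition Ck_on :: "nat \<Rightarrow> ('b::euclidean_space \<Rightarrow> real) \<Rightarrow> 'b set \<Rightarrow> bool" where
  "Ck_on k f U \<longleftrightarrow>
     (\<forall>vs. set vs \<subseteq> Basis \<and> length vs \<le> k \<longrightarrow>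
        continuous_on U (pd f vs) \<and>
        (length vs < k \<longrightarrow>
           (\<forall>v\<in>Basis. \<forall>x\<in>U. (\<lambda>t. pd f vs (x + t *\<^sub>R v)) differentiable (at 0))))"

definition C3_near :: "('b::euclidean_space \<Rightarrow> real) \<Rightarrow> 'b \<Rightarrow> bool" where
  "C3_near f x \<longleftrightarrow> (\<exists>U. open U \<and> x \<in> U \<and> Ck_on 3 f U)"

definition laplacian :: "('b::euclidean_space \<Rightarrow> real) \<Rightarrow> 'b \<Rightarrow> real" where
  "laplacian f x = (\<Sum>b\<in>Basis. pd f [b, b] x)"

text \<open>Joint law of (S, theta) with joint density f s t.\<close>
definition joint :: "('b::euclidean_space \<Rightarrow> 'a::euclidean_space \<Rightarrow> real) \<Rightarrow> ('b \<times> 'a) measure" where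
  "joint f = density lborel (\<lambda>(s, t). ennreal (f s t))"

definition marg_S :: "('b::euclidean_space \<Rightarrow> 'a::euclidean_space \<Rightarrow> real) \<Rightarrow> 'b \<Rightarrow> real" where
  "marg_S f s = (LINT t|lborel. f s t)"

definition phi :: "('b::euclidean_space \<Rightarrow> 'a::euclidean_space \<Rightarrow> real) \<Rightarrow> ('a \<Rightarrow> real) \<Rightarrow> 'b \<Rightarrow> real" where
  "phi f h s = (LINT t|lborel. h t * f s t)"

definition cond_dens :: "('b::euclidean_space \<Rightarrow> 'a::euclidean_space \<Rightarrow> real) \<Rightarrow> 'a \<Rightarrow> 'b \<Rightarrow> real" where
  "cond_dens f t s = (if marg_S f s > 0 then f s t / marg_S f s else 0)"

definition post_mean :: "('b::euclidean_space \<Rightarrow> 'a::euclidean_space \<Rightarrow> real) \<Rightarrow> ('a \<Rightarrow> real) \<Rightarrow> 'b \<Rightarrow> real" where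
  "post_mean f h s = (LINT t|lborel. h t * cond_dens f t s)"

text \<open>Law of one accepted value theta in the rejection ABC algorithm:
  the law of theta under the joint law conditioned on the acceptance event
  ||S - s*|| \<le> delta.\<close>
definition abc_accepted :: "('b::euclidean_space \<Rightarrow> 'a::euclidean_space \<Rightarrow> real) \<Rightarrow> 'b \<Rightarrow> real \<Rightarrow> 'a measure" where
  "abc_accepted f s\<^sub>0 \<delta> =
     distr (uniform_measure (joint f) {(s, t). norm (s - s\<^sub>0) \<le> \<delta>}) lborel snd"

text \<open>E(Y_n^(delta)): the n accepted values are i.i.d. with law abc_accepted.\<close>
definition abc_expect :: "('b::euclidean_space \<Rightarrow> 'a::euclidean_space \<Rightarrow> real) \<Rightarrow> ('a \<Rightarrow> real) \<Rightarrow> 'b \<Rightarrow> real \<Rightarrow> nat \<Rightarrow> real" where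
  "abc_expect f h s\<^sub>0 \<delta> n =
     (\<integral>x. (1 / real n) * (\<Sum>j<n. h (x j)) \<partial>(PiM {..<n} (\<lambda>_. abc_accepted f s\<^sub>0 \<delta>)))"

definition abc_bias :: "('b::euclidean_space \<Rightarrow> 'a::euclidean_space \<Rightarrow> real) \<Rightarrow> ('a \<Rightarrow> real) \<Rightarrow> 'b \<Rightarrow> real \<Rightarrow> nat \<Rightarrow> real" where
  "abc_bias f h s\<^sub>0 \<delta> n = abc_expect f h s\<^sub>0 \<delta> n - post_mean f h s\<^sub>0"

end

theory Submission
  imports Defs
begin


lemma mvt_any:
  fixes \<phi> \<phi>' :: "real \<Rightarrow> real"
  assumes "\<And>t. t \<in> closed_segment 0 \<tau> \<Longrightarrow> (\<phi> has_real_derivative \<phi>' t) (at t)"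
  shows "\<exists>\<xi>\<in>closed_segment 0 \<tau>. \<phi> \<tau> - \<phi> 0 = \<tau> * \<phi>' \<xi>"
proof (cases "0 \<le> \<tau>")
  case True
  have "\<exists>x\<in>{0..\<tau>}. \<phi> \<tau> - \<phi> 0 = (*) (\<phi>' x) (\<tau> - 0)"
  proof (rule mvt_very_simple[OF True])
    fix x assume "0 \<le> x" "x \<le> \<tau>"
    then have "x \<in> closed_segment 0 \<tau>" using True by (simp add: closed_segment_eq_real_ivl)
    from assms[OF this] show "(\<phi> has_derivative (*) (\<phi>' x)) (at x within {0..\<tau>})"
      by (simp add: has_field_derivative_def has_derivative_at_withinI)
  qed
  then show ?thesis using True by (auto simp: closed_segment_eq_real_ivl mult.commute)
next
  case False
  have "\<exists>x\<in>{\<tau>..0}. \<phi> 0 - \<phi> \<tau> = (*) (\<phi>' x) (0 - \<tau>)"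
  proof (rule mvt_very_simple)
    show "\<tau> \<le> 0" using False by simp
    fix x assume "\<tau> \<le> x" "x \<le> 0"
    then have "x \<in> closed_segment 0 \<tau>" using False by (simp add: closed_segment_eq_real_ivl)
    from assms[OF this] show "(\<phi> has_derivative (*) (\<phi>' x)) (at x within {\<tau>..0})"
      by (simp add: has_field_derivative_def has_derivative_at_withinI)
  qed
  then obtain x where "x\<in>{\<tau>..0}" "\<phi> 0 - \<phi> \<tau> = (0 - \<tau>) * \<phi>' x" by auto
  then show ?thesis using False by (intro bexI[of _ x]) (auto simp: closed_segment_eq_real_ivl algebra_simps)
qed

lemma pyth_basis:
  fixes k c :: "'b::euclidean_space"
  assumes "k \<bullet> c = 0" "c \<in> Basis"
  shows "norm (k + t *\<^sub>R c) ^ 2 = norm k ^ 2 + t ^ 2"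
  unfolding power2_norm_eq_inner using assms by (simp add: inner_add_left inner_add_right inner_commute power2_eq_square)

lemma ball_shift: "norm (w::'a::real_normed_vector) < r \<Longrightarrow> y + w \<in> ball y r"
  by (simp add: dist_norm)

lemma partials_has_derivative:
  fixes u :: "'b::euclidean_space \<Rightarrow> real" and D :: "'b \<Rightarrow> 'b \<Rightarrow> real"
  assumes U: "open U" "y \<in> U"
    and der: "\<And>z b. z \<in> U \<Longrightarrow> b \<in> Basis \<Longrightarrow> ((\<lambda>t. u (z + t *\<^sub>R b)) has_real_derivative D b z) (at 0)"
    and cont: "\<And>b. b \<in> Basis \<Longrightarrow> continuous_on U (D b)"
  shows "(u has_derivative (\<lambda>k. \<Sum>b\<in>Basis. (k \<bullet> b) * D b y)) (at y)"
proof -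
  obtain r0 where r0: "r0 > 0" "ball y r0 \<subseteq> U" using U open_contains_ball by blast
  define P where "P S \<longleftrightarrow> (\<forall>e>0. \<exists>d>0. \<forall>k. (\<forall>b\<in>Basis - S. k \<bullet> b = 0) \<longrightarrow> norm k < d \<longrightarrow>
      \<bar>u (y + k) - u y - (\<Sum>b\<in>S. (k \<bullet> b) * D b y)\<bar> \<le> e * norm k)" for S
  have "P S" if "S \<subseteq> Basis" for S
  proof -
    have fin: "finite S" using finite_subset[OF that finite_Basis] .
    show ?thesis
    proof (rule finite_subset_induct'[OF fin that])
      show "P {}" unfolding P_def
      proof (intro allI impI exI[of _ 1] conjI)
        fix e :: real and k :: 'b assume "0 < e" "\<forall>b\<in>Basis - {}. k \<bullet> b = 0"
        then have "k = 0" by (simp add: euclidean_all_zero_iff)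
        then show "\<bar>u (y + k) - u y - (\<Sum>b\<in>{}. k \<bullet> b * D b y)\<bar> \<le> e * norm k" by simp
      qed simp
    next
      fix c S assume insert_hyps: "finite S" "c \<in> Basis" "S \<subseteq> Basis" "c \<notin> S" and IH: "P S"
      show "P (insert c S)" unfolding P_def
      proof (intro allI impI)
        fix e :: real assume e: "e > 0"
        obtain d1 where d1: "d1 > 0" and d1k: "\<And>k. (\<forall>b\<in>Basis - S. k \<bullet> b = 0) \<Longrightarrow> norm k < d1 \<Longrightarrow>
            \<bar>u (y + k) - u y - (\<Sum>b\<in>S. (k \<bullet> b) * D b y)\<bar> \<le> e/2 * norm k"
          using IH[unfolded P_def, rule_format, of "e/2"] e by auto
        obtain d2 where d2: "d2 > 0" and d2z: "\<And>z. z \<in> U \<Longrightarrow> dist z y < d2 \<Longrightarrow> dist (D c z) (D c y) < e/2"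
        proof -
          have "continuous_on U (D c)" using cont insert_hyps(2) by blast
          then have "\<forall>e>0. \<exists>d>0. \<forall>x'\<in>U. dist x' y < d \<longrightarrow> dist (D c x') (D c y) < e"
            using U(2) unfolding continuous_on_iff by blast
          then have "\<exists>d>0. \<forall>x'\<in>U. dist x' y < d \<longrightarrow> dist (D c x') (D c y) < e/2"
            using e by (intro mp[OF spec[OF \<open>\<forall>e>0. _\<close>, of "e/2"]]) simp
          then show ?thesis using that by blast
        qed
        show "\<exists>d>0. \<forall>k. (\<forall>b\<in>Basis - insert c S. k \<bullet> b = 0) \<longrightarrow> norm k < d \<longrightarrow>
            \<bar>u (y + k) - u y - (\<Sum>b\<in>insert c S. k \<bullet> b * D b y)\<bar> \<le> e * norm k"
        proof (intro exI[of _ "min d1 (min d2 r0)"] conjI allI impI)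
          show "min d1 (min d2 r0) > 0" using d1 d2 r0 by simp
          fix k :: 'b
          assume kz: "\<forall>b\<in>Basis - insert c S. k \<bullet> b = 0" and kn: "norm k < min d1 (min d2 r0)"
          define \<tau> where "\<tau> = k \<bullet> c"
          define k' where "k' = k - \<tau> *\<^sub>R c"
          have cB: "c \<in> Basis" by fact
          have k'c: "k' \<bullet> c = 0" using cB by (simp add: k'_def \<tau>_def inner_diff_left)
          have k'b: "k' \<bullet> b = k \<bullet> b" if "b \<in> S" for b
          proof -
            have bB: "b \<in> Basis" "b \<noteq> c" using that insert_hyps by auto
            then show ?thesis using cB by (simp add: k'_def inner_diff_left inner_Basis)
          qed
          have k'z: "\<forall>b\<in>Basis - S. k' \<bullet> b = 0"
          proof
            fix b assume b: "b \<in> Basis - S"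
            show "k' \<bullet> b = 0"
            proof (cases "b = c")
              case True then show ?thesis using k'c by simp
            next
              case False then show ?thesis using kz b cB by (auto simp: k'_def inner_diff_left inner_Basis)
            qed
          qed
          have kk': "k = k' + \<tau> *\<^sub>R c" by (simp add: k'_def)
          have nk: "norm k ^ 2 = norm k' ^ 2 + \<tau> ^ 2" using pyth_basis[OF k'c cB] kk' by simp
          have nk': "norm k' \<le> norm k" by (rule power2_le_imp_le) (use nk in simp_all)
          have nt: "\<bar>\<tau>\<bar> \<le> norm k" unfolding \<tau>_def by (rule Basis_le_norm[OF cB])
          define \<phi> where "\<phi> t = u (y + k' + t *\<^sub>R c)" for t
          have zin: "norm (k' + t *\<^sub>R c) < min d2 r0" if "t \<in> closed_segment 0 \<tau>" for t
          proof -
            have "\<bar>t\<bar> \<le> \<bar>\<tau>\<bar>" using that by (auto simp: closed_segment_eq_real_ivl split: if_splits)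
            then have "t^2 \<le> \<tau>^2" by (simp add: abs_le_square_iff)
            then have "norm (k' + t *\<^sub>R c) ^ 2 \<le> norm k ^ 2" using pyth_basis[OF k'c cB] nk by simp
            then have "norm (k' + t *\<^sub>R c) \<le> norm k" by (rule power2_le_imp_le) simp
            then show ?thesis using kn by simp
          qed
          have derphi: "(\<phi> has_real_derivative D c (y + k' + t *\<^sub>R c)) (at t)" if "t \<in> closed_segment 0 \<tau>" for t
          proof -
            have zU: "y + k' + t *\<^sub>R c \<in> U" using ball_shift[of "k' + t *\<^sub>R c" r0 y] zin[OF that] r0 by (auto simp: add.assoc)
            have "((\<lambda>s. u ((y + k' + t *\<^sub>R c) + s *\<^sub>R c)) has_real_derivative D c (y + k' + t *\<^sub>R c)) (at 0)"
              by (rule der[OF zU cB])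
            then have "((\<lambda>s. \<phi> (s + t)) has_real_derivative D c (y + k' + t *\<^sub>R c)) (at 0)"
              by (simp add: \<phi>_def scaleR_add_left add_ac)
            then show ?thesis using DERIV_shift[of \<phi> _ 0 t] by simp
          qed
          obtain \<xi> where \<xi>: "\<xi> \<in> closed_segment 0 \<tau>" and mv: "\<phi> \<tau> - \<phi> 0 = \<tau> * D c (y + k' + \<xi> *\<^sub>R c)"
            using mvt_any[of \<tau> \<phi>, OF derphi] by blast
          have zU: "y + k' + \<xi> *\<^sub>R c \<in> U" using ball_shift[of "k' + \<xi> *\<^sub>R c" r0 y] zin[OF \<xi>] r0 by (auto simp: add.assoc)
          have "dist (D c (y + k' + \<xi> *\<^sub>R c)) (D c y) < e/2"
            using d2z[OF zU] zin[OF \<xi>] by (simp add: dist_norm)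
          then have A: "\<bar>u (y + k) - u (y + k') - \<tau> * D c y\<bar> \<le> e/2 * norm k"
          proof -
            assume a: "dist (D c (y + k' + \<xi> *\<^sub>R c)) (D c y) < e/2"
            have "u (y + k) - u (y + k') - \<tau> * D c y = \<tau> * (D c (y + k' + \<xi> *\<^sub>R c) - D c y)"
            proof -
              have "\<phi> \<tau> = u (y + k)" unfolding \<phi>_def by (simp add: k'_def)
              moreover have "\<phi> 0 = u (y + k')" unfolding \<phi>_def by simp
              ultimately show ?thesis using mv by (simp add: right_diff_distrib)
            qed
            also have "\<bar>\<dots>\<bar> \<le> norm k * (e/2)"
              unfolding abs_mult using a nt by (intro mult_mono) (auto simp: dist_real_def)
            finally show ?thesis by (simp add: mult.commute)
          qed
          have B: "\<bar>u (y + k') - u y - (\<Sum>b\<in>S. (k \<bullet> b) * D b y)\<bar> \<le> e/2 * norm k"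
          proof -
            have "\<bar>u (y + k') - u y - (\<Sum>b\<in>S. (k' \<bullet> b) * D b y)\<bar> \<le> e/2 * norm k'"
              using d1k[OF k'z] nk' kn by simp
            also have "\<dots> \<le> e/2 * norm k" using nk' e by simp
            finally show ?thesis using k'b by simp
          qed
          have "(\<Sum>b\<in>insert c S. k \<bullet> b * D b y) = \<tau> * D c y + (\<Sum>b\<in>S. (k \<bullet> b) * D b y)"
            using insert_hyps by (simp add: \<tau>_def)
          then show "\<bar>u (y + k) - u y - (\<Sum>b\<in>insert c S. k \<bullet> b * D b y)\<bar> \<le> e * norm k"
            using A B by linarith
        qed
      qed
    qed
  qed
  then have PB: "P Basis" by simp
  have bl: "bounded_linear (\<lambda>k. \<Sum>b\<in>Basis. (k \<bullet> b) * D b y)"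
    by (intro bounded_linear_sum bounded_linear_mult_const bounded_linear_inner_left)
  show ?thesis unfolding has_derivative_at_alt
  proof (intro conjI bl allI impI)
    fix e :: real assume "e > 0"
    then obtain d where "d > 0" and dk: "\<And>k. norm k < d \<Longrightarrow> \<bar>u (y + k) - u y - (\<Sum>b\<in>Basis. (k \<bullet> b) * D b y)\<bar> \<le> e * norm k"
      using PB unfolding P_def by auto
    show "\<exists>d>0. \<forall>ya. norm (ya - y) < d \<longrightarrow> norm (u ya - u y - (\<Sum>b\<in>Basis. (ya - y) \<bullet> b * D b y)) \<le> e * norm (ya - y)"
    proof (intro exI[of _ d] conjI allI impI)
      fix z assume "norm (z - y) < d"
      from dk[OF this] show "norm (u z - u y - (\<Sum>b\<in>Basis. (z - y) \<bullet> b * D b y)) \<le> e * norm (z - y)"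
        by simp
    qed (rule \<open>d > 0\<close>)
  qed
qed

lemma Ck_partial:
  assumes "Ck_on 3 g U" "set vs \<subseteq> Basis" "length vs < 3" "z \<in> U" "b \<in> Basis"
  shows "((\<lambda>t. pd g vs (z + t *\<^sub>R b)) has_real_derivative pd g (b # vs) z) (at 0)"
proof -
  have "(\<lambda>t. pd g vs (z + t *\<^sub>R b)) differentiable (at 0)"
    using assms unfolding Ck_on_def by auto
  then show ?thesis using DERIV_deriv_iff_real_differentiable by simp
qed

lemma Ck_cont:
  assumes "Ck_on 3 g U" "set vs \<subseteq> Basis" "length vs \<le> 3"
  shows "continuous_on U (pd g vs)"
  using assms unfolding Ck_on_def by auto

lemma Ck_frechet:
  assumes "Ck_on 3 g U" "open U" "set vs \<subseteq> Basis" "length vs < 3" "y \<in> U"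
  shows "(pd g vs has_derivative (\<lambda>k. \<Sum>b\<in>Basis. (k \<bullet> b) * pd g (b # vs) y)) (at y)"
proof (rule partials_has_derivative[where D="\<lambda>b. pd g (b # vs)"])
  show "open U" "y \<in> U" by fact+
  show "((\<lambda>t. pd g vs (z + t *\<^sub>R b)) has_real_derivative pd g (b # vs) z) (at 0)"
    if "z \<in> U" "b \<in> Basis" for z b using Ck_partial[OF assms(1,3,4) that] .
  show "continuous_on U (pd g (b # vs))" if "b \<in> Basis" for b
  proof (rule Ck_cont[OF assms(1)])
    show "set (b # vs) \<subseteq> Basis" "length (b # vs) \<le> 3" using that assms(3,4) by auto
  qed
qed

lemma line_deriv:
  assumes "Ck_on 3 g U" "open U" "set vs \<subseteq> Basis" "length vs < 3" "s0 + t *\<^sub>R x \<in> U"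
  shows "((\<lambda>t. pd g vs (s0 + t *\<^sub>R x)) has_real_derivative
            (\<Sum>b\<in>Basis. (x \<bullet> b) * pd g (b # vs) (s0 + t *\<^sub>R x))) (at t)"
proof -
  have l: "((\<lambda>t. s0 + t *\<^sub>R x) has_derivative (\<lambda>k. k *\<^sub>R x)) (at t)"
    by (auto intro!: derivative_eq_intros)
  have "((\<lambda>t. pd g vs (s0 + t *\<^sub>R x)) has_derivative
          (\<lambda>k. \<Sum>b\<in>Basis. ((k *\<^sub>R x) \<bullet> b) * pd g (b # vs) (s0 + t *\<^sub>R x))) (at t)"
    by (rule has_derivative_compose[OF l Ck_frechet[OF assms]])
  then show ?thesis unfolding has_field_derivative_def
    by (rule has_derivative_eq_rhs) (auto simp: fun_eq_iff sum_distrib_left algebra_simps)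
qed

lemma taylor3:
  fixes g :: "'b::euclidean_space \<Rightarrow> real"
  assumes C: "Ck_on 3 g U" "open U" "cball s0 r \<subseteq> U"
  shows "\<exists>K. \<forall>x. norm x \<le> r \<longrightarrow> \<bar>g (s0 + x) - g s0 - (\<Sum>b\<in>Basis. (x \<bullet> b) * pd g [b] s0)
            - (\<Sum>b\<in>Basis. \<Sum>c\<in>Basis. (x \<bullet> b) * (x \<bullet> c) * pd g [c, b] s0) / 2\<bar> \<le> K * norm x ^ 3"
proof -
  define F where "F z = (\<Sum>b\<in>Basis. \<Sum>c\<in>Basis. \<Sum>d\<in>Basis. \<bar>pd g [d, c, b] z\<bar>)" for z
  have "continuous_on U F" unfolding F_def
    by (intro continuous_intros Ck_cont[OF C(1)]) auto
  then have "continuous_on (cball s0 r) F" using C(3) continuous_on_subset by blast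
  then have "bounded (F ` cball s0 r)" by (intro compact_imp_bounded compact_continuous_image) auto
  then obtain M where M0: "\<forall>y\<in>F ` cball s0 r. \<bar>y\<bar> \<le> M" unfolding bounded_real by blast
  then have M: "\<And>z. z \<in> cball s0 r \<Longrightarrow> \<bar>F z\<bar> \<le> M" by blast
  show ?thesis
  proof (intro exI[of _ "M / 6"] allI impI)
    fix x :: 'b assume xr: "norm x \<le> r"
    have inU: "s0 + t *\<^sub>R x \<in> U" if "0 \<le> t" "t \<le> 1" for t
    proof -
      have "norm (t *\<^sub>R x) \<le> r" using that xr by (simp add: mult_le_one order_trans[OF mult_left_le_one_le])
      then show ?thesis using C(3) by (auto simp: dist_norm intro!: subsetD[OF C(3)])
    qed
    define \<phi>0 where "\<phi>0 t = g (s0 + t *\<^sub>R x)" for t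
    define \<phi>1 where "\<phi>1 t = (\<Sum>b\<in>Basis. (x \<bullet> b) * pd g [b] (s0 + t *\<^sub>R x))" for t
    define \<phi>2 where "\<phi>2 t = (\<Sum>b\<in>Basis. (x \<bullet> b) * (\<Sum>c\<in>Basis. (x \<bullet> c) * pd g [c, b] (s0 + t *\<^sub>R x)))" for t
    define \<phi>3 where "\<phi>3 t = (\<Sum>b\<in>Basis. (x \<bullet> b) * (\<Sum>c\<in>Basis. (x \<bullet> c) *
                     (\<Sum>d\<in>Basis. (x \<bullet> d) * pd g [d, c, b] (s0 + t *\<^sub>R x))))" for t
    define diff where "diff m = (if m = 0 then \<phi>0 else if m = 1 then \<phi>1 else if m = 2 then \<phi>2 else \<phi>3)" for m :: nat
    have d0: "(\<phi>0 has_real_derivative \<phi>1 t) (at t)" if "0 \<le> t" "t \<le> 1" for t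
      using line_deriv[OF C(1,2), of "[]" s0 t x] inU[OF that] unfolding \<phi>0_def \<phi>1_def by simp
    have d1: "(\<phi>1 has_real_derivative \<phi>2 t) (at t)" if "0 \<le> t" "t \<le> 1" for t
      unfolding \<phi>1_def \<phi>2_def
      by (intro DERIV_sum DERIV_cmult line_deriv[OF C(1,2)] inU[OF that]) auto
    have d2: "(\<phi>2 has_real_derivative \<phi>3 t) (at t)" if "0 \<le> t" "t \<le> 1" for t
      unfolding \<phi>2_def \<phi>3_def
      by (intro DERIV_sum DERIV_cmult line_deriv[OF C(1,2)] inU[OF that]) auto
    obtain t where t: "0 < t" "t < 1" and mac:
      "g (s0 + 1 *\<^sub>R x) = (\<Sum>m<3. diff m 0 / fact m * 1 ^ m) + diff 3 t / fact 3 * 1 ^ 3"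
    proof -
      have "\<exists>t. 0 < t \<and> t < 1 \<and> \<phi>0 1 = (\<Sum>m<3. diff m 0 / fact m * 1 ^ m) + diff 3 t / fact 3 * 1 ^ 3"
      proof (rule Maclaurin)
        show "diff 0 = \<phi>0" by (simp add: diff_def)
        show "\<forall>m t. m < 3 \<and> 0 \<le> t \<and> t \<le> 1 \<longrightarrow> (diff m has_real_derivative diff (Suc m) t) (at t)"
        proof (intro allI impI)
          fix m :: nat and t :: real assume a: "m < 3 \<and> 0 \<le> t \<and> t \<le> 1"
          then consider "m = 0" | "m = 1" | "m = 2" by linarith
          then show "(diff m has_real_derivative diff (Suc m) t) (at t)"
            by cases (use a d0 d1 d2 in \<open>auto simp: diff_def\<close>)
        qed
      qed auto
      then show ?thesis using that unfolding \<phi>0_def by auto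
    qed
    have expand: "g (s0 + x) = g s0 + \<phi>1 0 + \<phi>2 0 / 2 + \<phi>3 t / 6"
      using mac by (simp add: diff_def \<phi>0_def eval_nat_numeral lessThan_Suc)
    have e1: "\<phi>1 0 = (\<Sum>b\<in>Basis. (x \<bullet> b) * pd g [b] s0)" by (simp add: \<phi>1_def)
    have e2: "\<phi>2 0 = (\<Sum>b\<in>Basis. \<Sum>c\<in>Basis. (x \<bullet> b) * (x \<bullet> c) * pd g [c, b] s0)"
      by (simp add: \<phi>2_def sum_distrib_left mult.assoc)
    have tz: "s0 + t *\<^sub>R x \<in> cball s0 r"
    proof -
      have "norm (t *\<^sub>R x) \<le> r" using t xr by (simp add: order_trans[OF mult_left_le_one_le])
      then show ?thesis by (simp add: dist_norm)
    qed
    have b3: "\<bar>\<phi>3 t\<bar> \<le> norm x ^ 3 * M"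
    proof -
      let ?z = "s0 + t *\<^sub>R x"
      have "\<bar>\<phi>3 t\<bar> \<le> (\<Sum>b\<in>Basis. \<Sum>c\<in>Basis. \<Sum>d\<in>Basis. norm x ^ 3 * \<bar>pd g [d, c, b] ?z\<bar>)"
        unfolding \<phi>3_def
      proof (rule order_trans[OF sum_abs], rule sum_mono)
        fix b :: 'b assume b: "b \<in> Basis"
        have "\<bar>(x \<bullet> b) * (\<Sum>c\<in>Basis. (x \<bullet> c) * (\<Sum>d\<in>Basis. (x \<bullet> d) * pd g [d, c, b] ?z))\<bar>
              = \<bar>x \<bullet> b\<bar> * \<bar>\<Sum>c\<in>Basis. (x \<bullet> c) * (\<Sum>d\<in>Basis. (x \<bullet> d) * pd g [d, c, b] ?z)\<bar>"
          by (simp add: abs_mult)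
        also have "\<dots> \<le> norm x * (\<Sum>c\<in>Basis. \<bar>x \<bullet> c\<bar> * (\<Sum>d\<in>Basis. \<bar>x \<bullet> d\<bar> * \<bar>pd g [d, c, b] ?z\<bar>))"
        proof (rule mult_mono)
          show "\<bar>x \<bullet> b\<bar> \<le> norm x" using b by (rule Basis_le_norm)
          show "\<bar>\<Sum>c\<in>Basis. (x \<bullet> c) * (\<Sum>d\<in>Basis. (x \<bullet> d) * pd g [d, c, b] ?z)\<bar>
                \<le> (\<Sum>c\<in>Basis. \<bar>x \<bullet> c\<bar> * (\<Sum>d\<in>Basis. \<bar>x \<bullet> d\<bar> * \<bar>pd g [d, c, b] ?z\<bar>))"
            by (rule order_trans[OF sum_abs], rule sum_mono)
               (auto simp: abs_mult intro!: mult_left_mono order_trans[OF sum_abs] sum_mono)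
        qed (auto intro!: sum_nonneg)
        also have "\<dots> \<le> norm x * (\<Sum>c\<in>Basis. norm x * (\<Sum>d\<in>Basis. norm x * \<bar>pd g [d, c, b] ?z\<bar>))"
          by (intro mult_left_mono sum_mono mult_mono order_refl Basis_le_norm sum_nonneg mult_nonneg_nonneg abs_ge_zero norm_ge_zero) auto
        also have "\<dots> = (\<Sum>c\<in>Basis. \<Sum>d\<in>Basis. norm x ^ 3 * \<bar>pd g [d, c, b] ?z\<bar>)"
          by (simp add: sum_distrib_left power3_eq_cube mult.assoc)
        finally show "\<bar>(x \<bullet> b) * (\<Sum>c\<in>Basis. (x \<bullet> c) * (\<Sum>d\<in>Basis. (x \<bullet> d) * pd g [d, c, b] ?z))\<bar>
              \<le> (\<Sum>c\<in>Basis. \<Sum>d\<in>Basis. norm x ^ 3 * \<bar>pd g [d, c, b] ?z\<bar>)" .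
      qed
      also have "\<dots> = norm x ^ 3 * F ?z" by (simp add: F_def sum_distrib_left)
      also have "\<dots> \<le> norm x ^ 3 * M" using M[OF tz] by (intro mult_left_mono) auto
      finally show ?thesis .
    qed
    show "\<bar>g (s0 + x) - g s0 - (\<Sum>b\<in>Basis. (x \<bullet> b) * pd g [b] s0)
            - (\<Sum>b\<in>Basis. \<Sum>c\<in>Basis. (x \<bullet> b) * (x \<bullet> c) * pd g [c, b] s0) / 2\<bar> \<le> M / 6 * norm x ^ 3"
      using expand e1 e2 b3 by (simp add: mult.commute)
  qed
qed



lemma coord_sum:
  fixes c :: "'b::euclidean_space \<Rightarrow> real"
  assumes "i \<in> Basis"
  shows "(\<Sum>j\<in>Basis. c j *\<^sub>R j) \<bullet> i = c i"
  using assms by (simp add: inner_sum_left inner_Basis if_distrib sum.delta cong: if_cong)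

lemma norm_sq_coords: "norm (x::'b::euclidean_space) ^ 2 = (\<Sum>i\<in>Basis. (x \<bullet> i) ^ 2)"
  unfolding power2_norm_eq_inner by (subst euclidean_inner) (simp add: power2_eq_square)

lemma integral_inv:
  fixes F :: "'b::euclidean_space \<Rightarrow> real"
  assumes "distr lborel borel T = lborel" "T \<in> borel_measurable borel" "F \<in> borel_measurable borel"
  shows "integral\<^sup>L lborel F = (\<integral>x. F (T x) \<partial>lborel)"
proof -
  have "integral\<^sup>L lborel F = integral\<^sup>L (distr lborel borel T) F" using assms(1) by simp
  also have "\<dots> = (\<integral>x. F (T x) \<partial>lborel)"
    by (rule integral_distr) (use assms(2,3) in auto)
  finally show ?thesis .
qed

lemma lborel_translate: "distr lborel borel (\<lambda>x. s0 + x) = (lborel :: 'b::euclidean_space measure)"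
  using lborel_affine[of 1 s0] by (simp add: density_1)

lemma lborel_reflect:
  fixes b :: "'b::euclidean_space"
  assumes b: "b \<in> Basis"
  shows "distr lborel borel (\<lambda>x. \<Sum>j\<in>Basis. ((if j = b then -1 else 1) * (x \<bullet> j)) *\<^sub>R j) = (lborel :: 'b measure)"
proof -
  have "(lborel :: 'b measure) = density (distr lborel borel (\<lambda>x. 0 + (\<Sum>j\<in>Basis. ((if j = b then -1 else 1) * (x \<bullet> j)) *\<^sub>R j)))
      (\<lambda>_. (\<Prod>j\<in>Basis. \<bar>if j = b then -1 else 1 :: real\<bar>))"
    by (rule lborel_affine_euclidean) auto
  also have "(\<Prod>j\<in>Basis. \<bar>if j = b then -1 else 1 :: real\<bar>) = 1"
    by (intro prod.neutral) auto
  finally show ?thesis by (simp add: density_1)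
qed

lemma reflect_coord:
  fixes b :: "'b::euclidean_space"
  assumes "i \<in> Basis"
  shows "(\<Sum>j\<in>Basis. ((if j = b then -1 else 1) * (x \<bullet> j)) *\<^sub>R j) \<bullet> i = (if i = b then - (x \<bullet> i) else x \<bullet> i)"
  using coord_sum[OF assms, of "\<lambda>j. (if j = b then -1 else 1) * (x \<bullet> j)"] by simp

lemma reflect_norm:
  fixes b :: "'b::euclidean_space"
  shows "norm (\<Sum>j\<in>Basis. ((if j = b then -1 else 1) * (x \<bullet> j)) *\<^sub>R j) = norm x"
proof -
  let ?y = "\<Sum>j\<in>Basis. ((if j = b then -1 else 1) * (x \<bullet> j)) *\<^sub>R j"
  have "norm ?y ^ 2 = norm x ^ 2"
    unfolding norm_sq_coords by (intro sum.cong refl) (simp add: reflect_coord)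
  then show ?thesis by (rule power2_eq_imp_eq) auto
qed

definition swapB :: "'b \<Rightarrow> 'b \<Rightarrow> 'b \<Rightarrow> 'b" where
  "swapB b c j = (if j = b then c else if j = c then b else j)"

lemma swapB_Basis: "b \<in> Basis \<Longrightarrow> c \<in> Basis \<Longrightarrow> j \<in> Basis \<Longrightarrow> swapB b c j \<in> Basis"
  by (simp add: swapB_def)

lemma swapB_inv: "swapB b c (swapB b c j) = j"
  by (simp add: swapB_def)

lemma swapB_bij: "b \<in> Basis \<Longrightarrow> c \<in> Basis \<Longrightarrow> bij_betw (swapB b c) (Basis::'b::euclidean_space set) Basis"
  by (rule bij_betw_byWitness[where f'="swapB b c"]) (auto simp: swapB_inv swapB_Basis)

definition permB :: "'b::euclidean_space \<Rightarrow> 'b \<Rightarrow> 'b \<Rightarrow> 'b" where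
  "permB b c x = (\<Sum>j\<in>Basis. (x \<bullet> swapB b c j) *\<^sub>R j)"

lemma permB_coord: "i \<in> Basis \<Longrightarrow> permB b c x \<bullet> i = x \<bullet> swapB b c i"
  unfolding permB_def by (rule coord_sum)

lemma permB_meas: "permB b c \<in> borel_measurable borel"
  unfolding permB_def by (intro borel_measurable_continuous_onI continuous_intros)

lemma permB_norm:
  assumes "b \<in> Basis" "c \<in> Basis"
  shows "norm (permB b c x) = norm x"
proof -
  have "norm (permB b c x) ^ 2 = (\<Sum>i\<in>Basis. (x \<bullet> swapB b c i) ^ 2)"
    unfolding norm_sq_coords by (intro sum.cong refl) (simp add: permB_coord)
  also have "\<dots> = (\<Sum>i\<in>Basis. (x \<bullet> i) ^ 2)"
    using sum.reindex_bij_betw[OF swapB_bij[OF assms], of "\<lambda>i. (x \<bullet> i) ^ 2"] by simp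
  finally show ?thesis unfolding norm_sq_coords[symmetric] by (rule power2_eq_imp_eq) auto
qed

lemma lborel_permB:
  fixes b c :: "'b::euclidean_space"
  assumes bc: "b \<in> Basis" "c \<in> Basis"
  shows "distr lborel borel (permB b c) = lborel"
proof (rule lborel_eqI[symmetric])
  show "sets (distr lborel borel (permB b c)) = sets borel" by simp
  fix l u :: 'b assume le: "\<And>i. i \<in> Basis \<Longrightarrow> l \<bullet> i \<le> u \<bullet> i"
  have pre: "permB b c -` box l u = box (permB b c l) (permB b c u)"
  proof (intro set_eqI iffI)
    fix x assume "x \<in> permB b c -` box l u"
    then have a: "\<And>i. i \<in> Basis \<Longrightarrow> l \<bullet> i < x \<bullet> swapB b c i \<and> x \<bullet> swapB b c i < u \<bullet> i"
      by (auto simp: mem_box permB_coord)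
    show "x \<in> box (permB b c l) (permB b c u)" unfolding mem_box permB_coord
    proof (intro ballI)
      fix i :: 'b assume i: "i \<in> Basis"
      from a[OF swapB_Basis[OF bc i]] show "permB b c l \<bullet> i < x \<bullet> i \<and> x \<bullet> i < permB b c u \<bullet> i"
        by (simp add: permB_coord[OF i] swapB_inv)
    qed
  next
    fix x assume "x \<in> box (permB b c l) (permB b c u)"
    then have a: "\<And>i. i \<in> Basis \<Longrightarrow> l \<bullet> swapB b c i < x \<bullet> i \<and> x \<bullet> i < u \<bullet> swapB b c i"
      by (auto simp: mem_box permB_coord)
    show "x \<in> permB b c -` box l u" unfolding vimage_eq mem_box
    proof (intro ballI)
      fix i :: 'b assume i: "i \<in> Basis"
      from a[OF swapB_Basis[OF bc i]] show "l \<bullet> i < permB b c x \<bullet> i \<and> permB b c x \<bullet> i < u \<bullet> i"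
        by (simp add: permB_coord[OF i] swapB_inv)
    qed
  qed
  have "emeasure (distr lborel borel (permB b c)) (box l u) = emeasure lborel (box (permB b c l) (permB b c u))"
    by (subst emeasure_distr) (auto simp: permB_meas pre)
  also have "\<dots> = (\<Prod>i\<in>Basis. (u - l) \<bullet> swapB b c i)"
    using le swapB_Basis[OF bc] by (simp add: emeasure_lborel_box_eq permB_coord inner_diff_left)
  also have "\<dots> = (\<Prod>i\<in>Basis. (u - l) \<bullet> i)"
    using prod.reindex_bij_betw[OF swapB_bij[OF bc], of "\<lambda>i. (u - l) \<bullet> i"] by simp
  finally show "emeasure (distr lborel borel (permB b c)) (box l u) = (\<Prod>i\<in>Basis. (u - l) \<bullet> i)" .
qed



lemma ftc_real:
  fixes F f :: "real \<Rightarrow> real"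
  assumes "a \<le> b" "\<And>x. (F has_real_derivative f x) (at x)"
  shows "(f has_integral (F b - F a)) {a..b}"
  by (rule fundamental_theorem_of_calculus[OF assms(1)])
     (use assms(2) in \<open>auto simp: has_real_derivative_iff_has_vector_derivative[symmetric] intro: DERIV_subset\<close>)

lemma inner_tri:
  assumes "0 \<le> a"
  shows "(\<integral>\<^sup>+t. ennreal (indicator {0..a} t * (2 * t)) \<partial>lborel) = ennreal (a ^ 2)"
proof -
  have "((\<lambda>t. 2 * t) has_integral ((\<lambda>t. t ^ 2) a - (\<lambda>t. t ^ 2) 0)) {0..a}"
    by (rule ftc_real[OF assms]) (auto intro!: derivative_eq_intros)
  then have "((\<lambda>t. 2 * t) has_integral a ^ 2) {0..a}" by simp
  from nn_integral_has_integral_lebesgue[OF _ this] show ?thesis by simp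
qed

lemma outer_int:
  fixes w d :: real and q :: nat
  assumes "0 \<le> d" "0 \<le> w"
  shows "(\<integral>\<^sup>+t. ennreal (indicator {0..d} t * (2 * t * (w * d ^ q - w * t ^ q))) \<partial>lborel)
           = ennreal (w * d ^ (q + 2) * q / (q + 2))"
proof -
  define F where "F t = w * (d ^ q * t ^ 2 - 2 * t ^ (q + 2) / (q + 2))" for t :: real
  have "((\<lambda>t. 2 * t * (w * d ^ q - w * t ^ q)) has_integral (F d - F 0)) {0..d}"
  proof (rule ftc_real[OF assms(1)])
    fix x :: real
    show "(F has_real_derivative 2 * x * (w * d ^ q - w * x ^ q)) (at x)"
      unfolding F_def
      by (rule derivative_eq_intros refl | simp)+ (simp add: field_simps power_Suc)
  qed
  moreover have "F d - F 0 = w * d ^ (q + 2) * q / (q + 2)"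
    by (simp add: F_def field_simps power_add power2_eq_square)
  ultimately have I: "((\<lambda>t. 2 * t * (w * d ^ q - w * t ^ q)) has_integral w * d ^ (q + 2) * q / (q + 2)) {0..d}"
    by simp
  have nn: "0 \<le> 2 * t * (w * d ^ q - w * t ^ q)" if "t \<in> {0..d}" for t
    using that assms by (auto intro!: mult_nonneg_nonneg mult_left_mono power_mono)
  from nn_integral_has_integral_lebesgue[OF nn I] show ?thesis by simp
qed

lemma emeasure_cball': "0 \<le> r \<Longrightarrow> emeasure lborel (cball (c::'b::euclidean_space) r) = ennreal (unit_ball_vol DIM('b) * r ^ DIM('b))"
  by (rule emeasure_cball)

lemma measure_cball': "0 \<le> r \<Longrightarrow> measure lborel (cball (c::'b::euclidean_space) r) = unit_ball_vol DIM('b) * r ^ DIM('b)"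
  by (simp add: measure_def emeasure_cball')

lemma emeasure_ball': "0 \<le> r \<Longrightarrow> emeasure lborel (ball (c::'b::euclidean_space) r) = ennreal (unit_ball_vol DIM('b) * r ^ DIM('b))"
proof -
  assume r: "0 \<le> r"
  have "emeasure lborel (ball c r) = ennreal (measure lborel (ball c r))"
    using emeasure_lborel_ball_finite[of c r] by (simp add: emeasure_eq_ennreal_measure)
  also have "measure lborel (ball c r) = measure lborel (cball c r)"
    using content_cball_conv_ball[of c r] by simp
  finally show ?thesis using measure_cball'[OF r, of c] by simp
qed

lemma integrable_cball:
  fixes f :: "'b::euclidean_space \<Rightarrow> real"
  assumes "continuous_on (cball c r) f"
  shows "integrable lborel (\<lambda>x. indicator (cball c r) x * f x)"
  using borel_integrable_compact[where S="cball c r" and f=f] assms by simp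

lemma sq_moment:
  assumes d: "0 \<le> \<delta>"
  shows "(\<integral>x. indicator (cball (0::'b::euclidean_space) \<delta>) x * norm x ^ 2 \<partial>lborel)
           = unit_ball_vol DIM('b) * \<delta> ^ (DIM('b) + 2) * DIM('b) / (DIM('b) + 2)"
proof -
  define q where "q = DIM('b)"
  define w where "w = unit_ball_vol DIM('b)"
  have w0: "0 \<le> w" by (simp add: w_def)
  define S where "S = {p :: 'b \<times> real. norm (fst p) \<le> \<delta> \<and> 0 \<le> snd p \<and> snd p \<le> norm (fst p)}"
  define G where "G x t = ennreal (indicator S (x, t) * (2 * t))" for x :: 'b and t :: real
  have "closed S" unfolding S_def
    by (intro closed_Collect_conj closed_Collect_le continuous_intros continuous_on_snd)
  then have Sb: "S \<in> sets borel" by (rule borel_closed)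
  have "(\<lambda>p. indicator S p *\<^sub>R (2 * snd p)) \<in> borel_measurable borel"
    by (rule borel_measurable_continuous_on_indicator[OF Sb]) (intro continuous_intros)
  then have m1: "(\<lambda>p. indicator S p * (2 * snd p)) \<in> borel_measurable (lborel \<Otimes>\<^sub>M lborel :: ('b \<times> real) measure)"
    by (simp add: lborel_prod measurable_lborel1)
  have meas: "case_prod G \<in> borel_measurable (lborel \<Otimes>\<^sub>M lborel)"
  proof -
    have "case_prod G = (\<lambda>p. ennreal (indicator S p * (2 * snd p)))"
      by (auto simp: G_def fun_eq_iff)
    then show ?thesis using measurable_compose[OF m1 measurable_ennreal] by (simp add: o_def)
  qed
  have step1: "(\<integral>\<^sup>+t. G x t \<partial>lborel) = ennreal (indicator (cball 0 \<delta>) x * norm x ^ 2)" for x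
  proof (cases "norm x \<le> \<delta>")
    case True
    then have "G x t = ennreal (indicator {0..norm x} t * (2 * t))" for t
      by (auto simp: G_def S_def indicator_def)
    then show ?thesis using True inner_tri[of "norm x"] by (simp add: indicator_def)
  next
    case False
    then have "G x t = 0" for t by (auto simp: G_def S_def indicator_def)
    then show ?thesis using False by (simp add: indicator_def)
  qed
  have step2: "(\<integral>\<^sup>+x. G x t \<partial>lborel) = ennreal (indicator {0..\<delta>} t * (2 * t * (w * \<delta> ^ q - w * t ^ q)))" for t
  proof (cases "0 \<le> t \<and> t \<le> \<delta>")
    case True
    then have "G x t = ennreal (2 * t) * indicator (cball (0::'b) \<delta> - ball 0 t) x" for x
      by (auto simp: G_def S_def indicator_def)
    then have "(\<integral>\<^sup>+x. G x t \<partial>lborel) = ennreal (2 * t) * emeasure lborel (cball (0::'b) \<delta> - ball 0 t)"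
      by (simp add: nn_integral_cmult_indicator)
    also have "emeasure lborel (cball (0::'b) \<delta> - ball 0 t) = emeasure lborel (cball (0::'b) \<delta>) - emeasure lborel (ball (0::'b) t)"
      using True emeasure_lborel_ball_finite[of "0::'b" t] by (intro emeasure_Diff) auto
    also have "\<dots> = ennreal (w * \<delta> ^ q - w * t ^ q)"
      using True by (simp add: emeasure_cball' emeasure_ball' w_def q_def ennreal_minus)
    finally show ?thesis using True
      by (simp add: ennreal_mult'[symmetric] mult_nonneg_nonneg)
  next
    case False
    then have "G x t = 0" for x by (auto simp: G_def S_def indicator_def)
    then show ?thesis using False by (auto simp: indicator_def)
  qed
  have integ: "integrable lborel (\<lambda>x. indicator (cball (0::'b) \<delta>) x * norm x ^ 2)"
    by (intro integrable_cball continuous_intros)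
  have "ennreal (\<integral>x. indicator (cball (0::'b) \<delta>) x * norm x ^ 2 \<partial>lborel)
        = (\<integral>\<^sup>+x. ennreal (indicator (cball (0::'b) \<delta>) x * norm x ^ 2) \<partial>lborel)"
    using nn_integral_eq_integral[OF integ] by simp
  also have "\<dots> = (\<integral>\<^sup>+x. (\<integral>\<^sup>+t. G x t \<partial>lborel) \<partial>lborel)" by (simp add: step1)
  also have "\<dots> = (\<integral>\<^sup>+t. (\<integral>\<^sup>+x. G x t \<partial>lborel) \<partial>lborel)"
    by (rule lborel_pair.Fubini'[OF meas, symmetric])
  also have "\<dots> = (\<integral>\<^sup>+t. ennreal (indicator {0..\<delta>} t * (2 * t * (w * \<delta> ^ q - w * t ^ q))) \<partial>lborel)"
    by (simp add: step2)
  also have "\<dots> = ennreal (w * \<delta> ^ (q + 2) * q / (q + 2))"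
    by (rule outer_int[OF d w0])
  finally have "ennreal (\<integral>x. indicator (cball (0::'b) \<delta>) x * norm x ^ 2 \<partial>lborel) = ennreal (w * \<delta> ^ (q + 2) * q / (q + 2))" .
  moreover have "0 \<le> (\<integral>x. indicator (cball (0::'b) \<delta>) x * norm x ^ 2 \<partial>lborel)"
    by (intro integral_nonneg_AE) auto
  moreover have "0 \<le> w * \<delta> ^ (q + 2) * q / (q + 2)" using w0 d by simp
  ultimately show ?thesis by (simp add: w_def q_def)
qed



lemma reflect_meas: "(\<lambda>x::'b::euclidean_space. \<Sum>j\<in>Basis. ((if j = b then -1 else 1) * (x \<bullet> j)) *\<^sub>R j) \<in> borel_measurable borel"
  by (intro borel_measurable_continuous_onI continuous_intros)

lemma ind_meas:
  fixes f :: "'b::euclidean_space \<Rightarrow> real"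
  assumes "continuous_on UNIV f"
  shows "(\<lambda>x. indicator (cball c r) x * f x) \<in> borel_measurable borel"
  using borel_measurable_continuous_on_indicator[of "cball c r" f] continuous_on_subset[OF assms] by auto

lemma mom1:
  fixes b :: "'b::euclidean_space"
  assumes b: "b \<in> Basis"
  shows "(\<integral>x. indicator (cball (0::'b) \<delta>) x * (x \<bullet> b) \<partial>lborel) = 0"
proof -
  let ?R = "\<lambda>x::'b. \<Sum>j\<in>Basis. ((if j = b then -1 else 1) * (x \<bullet> j)) *\<^sub>R j"
  let ?F = "\<lambda>x::'b. indicator (cball (0::'b) \<delta>) x * (x \<bullet> b)"
  have "integral\<^sup>L lborel ?F = (\<integral>x. ?F (?R x) \<partial>lborel)"
    by (rule integral_inv[OF lborel_reflect[OF b] reflect_meas ind_meas]) (intro continuous_intros)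
  also have "\<dots> = (\<integral>x. - ?F x \<partial>lborel)"
    by (intro Bochner_Integration.integral_cong refl) (simp add: reflect_coord[OF b] reflect_norm indicator_def)
  also have "\<dots> = - integral\<^sup>L lborel ?F" by simp
  finally show ?thesis by simp
qed

lemma mom2off:
  fixes b c :: "'b::euclidean_space"
  assumes b: "b \<in> Basis" and c: "c \<in> Basis" and bc: "b \<noteq> c"
  shows "(\<integral>x. indicator (cball (0::'b) \<delta>) x * ((x \<bullet> b) * (x \<bullet> c)) \<partial>lborel) = 0"
proof -
  let ?R = "\<lambda>x::'b. \<Sum>j\<in>Basis. ((if j = b then -1 else 1) * (x \<bullet> j)) *\<^sub>R j"
  let ?F = "\<lambda>x::'b. indicator (cball (0::'b) \<delta>) x * ((x \<bullet> b) * (x \<bullet> c))"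
  have "integral\<^sup>L lborel ?F = (\<integral>x. ?F (?R x) \<partial>lborel)"
    by (rule integral_inv[OF lborel_reflect[OF b] reflect_meas ind_meas]) (intro continuous_intros)
  also have "\<dots> = (\<integral>x. - ?F x \<partial>lborel)"
    by (intro Bochner_Integration.integral_cong refl)
       (use bc in \<open>simp add: reflect_coord[OF b] reflect_coord[OF c] reflect_norm indicator_def\<close>)
  also have "\<dots> = - integral\<^sup>L lborel ?F" by simp
  finally show ?thesis by simp
qed

lemma mom2eq:
  fixes b c :: "'b::euclidean_space"
  assumes b: "b \<in> Basis" and c: "c \<in> Basis"
  shows "(\<integral>x. indicator (cball (0::'b) \<delta>) x * (x \<bullet> b) ^ 2 \<partial>lborel)
       = (\<integral>x. indicator (cball (0::'b) \<delta>) x * (x \<bullet> c) ^ 2 \<partial>lborel)"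
proof -
  let ?F = "\<lambda>x::'b. indicator (cball (0::'b) \<delta>) x * (x \<bullet> b) ^ 2"
  have "integral\<^sup>L lborel ?F = (\<integral>x. ?F (permB b c x) \<partial>lborel)"
    by (rule integral_inv[OF lborel_permB[OF b c] permB_meas ind_meas]) (intro continuous_intros)
  also have "\<dots> = (\<integral>x. indicator (cball (0::'b) \<delta>) x * (x \<bullet> c) ^ 2 \<partial>lborel)"
    by (intro Bochner_Integration.integral_cong refl)
       (simp add: permB_coord[OF b] permB_norm[OF b c] indicator_def swapB_def)
  finally show ?thesis .
qed

lemma mom2:
  fixes b :: "'b::euclidean_space"
  assumes b: "b \<in> Basis" and d: "0 \<le> \<delta>"
  shows "(\<integral>x. indicator (cball (0::'b) \<delta>) x * (x \<bullet> b) ^ 2 \<partial>lborel)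
       = measure lborel (cball (0::'b) \<delta>) * \<delta> ^ 2 / (DIM('b) + 2)"
proof -
  let ?m = "\<lambda>c. (\<integral>x. indicator (cball (0::'b) \<delta>) x * (x \<bullet> c) ^ 2 \<partial>lborel)"
  have "(\<integral>x. (\<Sum>c\<in>Basis. indicator (cball (0::'b) \<delta>) x * (x \<bullet> c) ^ 2) \<partial>lborel) = (\<Sum>c\<in>Basis. ?m c)"
    by (rule Bochner_Integration.integral_sum) (intro integrable_cball continuous_intros)
  then have "(\<Sum>c\<in>Basis. ?m c) = (\<integral>x. (\<Sum>c\<in>Basis. indicator (cball (0::'b) \<delta>) x * (x \<bullet> c) ^ 2) \<partial>lborel)"
    by simp
  also have "\<dots> = (\<integral>x. indicator (cball (0::'b) \<delta>) x * norm x ^ 2 \<partial>lborel)"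
    by (simp add: norm_sq_coords sum_distrib_left)
  also have "\<dots> = unit_ball_vol DIM('b) * \<delta> ^ (DIM('b) + 2) * DIM('b) / (DIM('b) + 2)"
    by (rule sq_moment[OF d])
  finally have S: "(\<Sum>c\<in>Basis. ?m c) = unit_ball_vol DIM('b) * \<delta> ^ (DIM('b) + 2) * DIM('b) / (DIM('b) + 2)" .
  have eqm: "?m c = ?m b" if "c \<in> Basis" for c using mom2eq[OF b that] by simp
  have "(\<Sum>c\<in>Basis. ?m c) = (\<Sum>(c::'b)\<in>Basis. ?m b)"
    using eqm by (intro sum.cong) auto
  also have "\<dots> = DIM('b) * ?m b" by simp
  finally have "DIM('b) * ?m b = unit_ball_vol DIM('b) * \<delta> ^ (DIM('b) + 2) * DIM('b) / (DIM('b) + 2)"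
    using S by simp
  then have "?m b = (unit_ball_vol DIM('b) * \<delta> ^ (DIM('b) + 2) * DIM('b) / (DIM('b) + 2)) / DIM('b)"
    by (simp add: eq_divide_eq mult.commute)
  also have "\<dots> = unit_ball_vol DIM('b) * \<delta> ^ (DIM('b) + 2) / (DIM('b) + 2)"
    by simp
  finally have "?m b = unit_ball_vol DIM('b) * \<delta> ^ (DIM('b) + 2) / (DIM('b) + 2)" .
  then show ?thesis using measure_cball'[OF d, of "0::'b"] by (simp add: power_add power2_eq_square)
qed



lemma mom2gen:
  fixes b c :: "'b::euclidean_space"
  assumes b: "b \<in> Basis" and c: "c \<in> Basis" and d: "0 \<le> \<delta>"
  shows "(\<integral>x. indicator (cball (0::'b) \<delta>) x * ((x \<bullet> b) * (x \<bullet> c)) \<partial>lborel)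
       = (if b = c then measure lborel (cball (0::'b) \<delta>) * \<delta> ^ 2 / (DIM('b) + 2) else 0)"
  using mom2off[OF b c] mom2[OF b d] by (auto simp: power2_eq_square)

lemma ball_expansion:
  fixes g :: "'b::euclidean_space \<Rightarrow> real"
  assumes C: "Ck_on 3 g U" "open U" "cball s0 r \<subseteq> U"
  shows "\<exists>K. \<forall>\<delta>. 0 < \<delta> \<and> \<delta> \<le> r \<longrightarrow>
     \<bar>(\<integral>s. indicator (cball s0 \<delta>) s * g s \<partial>lborel)
        - measure lborel (cball (0::'b) \<delta>) * (g s0 + laplacian g s0 * \<delta> ^ 2 / (2 * (DIM('b) + 2)))\<bar>
       \<le> K * \<delta> ^ 3 * measure lborel (cball (0::'b) \<delta>)"
proof -
  obtain K0 where K0: "\<And>x. norm x \<le> r \<Longrightarrow> \<bar>g (s0 + x) - g s0 - (\<Sum>b\<in>Basis. (x \<bullet> b) * pd g [b] s0)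
            - (\<Sum>b\<in>Basis. \<Sum>c\<in>Basis. (x \<bullet> b) * (x \<bullet> c) * pd g [c, b] s0) / 2\<bar> \<le> K0 * norm x ^ 3"
    using taylor3[OF C] by blast
  define K where "K = max K0 0"
  have gc: "continuous_on U g" using Ck_cont[OF C(1), of "[]"] by simp
  define T where "T x = g s0 + (\<Sum>b\<in>Basis. (x \<bullet> b) * pd g [b] s0)
            + (\<Sum>b\<in>Basis. \<Sum>c\<in>Basis. (x \<bullet> b) * (x \<bullet> c) * pd g [c, b] s0) / 2" for x :: 'b
  show ?thesis
  proof (intro exI[of _ K] allI impI)
    fix \<delta> :: real assume "0 < \<delta> \<and> \<delta> \<le> r"
    then have d0: "0 < \<delta>" and dr: "\<delta> \<le> r" by auto
    define V where "V = measure lborel (cball (0::'b) \<delta>)"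
    let ?I = "\<lambda>x::'b. indicator (cball (0::'b) \<delta>) x :: real"
    have sub: "cball s0 \<delta> \<subseteq> U" using C(3) dr by (meson cball_subset_cball_iff order_trans order_refl)
    have gcb: "continuous_on (cball s0 \<delta>) g" using continuous_on_subset[OF gc sub] .
    have gsh: "continuous_on (cball 0 \<delta>) (\<lambda>x. g (s0 + x))"
    proof (rule continuous_on_compose2[OF gcb])
      show "continuous_on (cball 0 \<delta>) ((+) s0)" by (intro continuous_intros)
      show "(+) s0 ` cball 0 \<delta> \<subseteq> cball s0 \<delta>" by (auto simp: dist_norm)
    qed
    have trans: "(\<integral>s. indicator (cball s0 \<delta>) s * g s \<partial>lborel) = (\<integral>x. ?I x * g (s0 + x) \<partial>lborel)"
    proof -
      have m: "(\<lambda>s. indicator (cball s0 \<delta>) s * g s) \<in> borel_measurable borel"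
        using borel_measurable_continuous_on_indicator[OF _ gcb] by simp
      have "(\<integral>s. indicator (cball s0 \<delta>) s * g s \<partial>lborel)
            = (\<integral>x. indicator (cball s0 \<delta>) (s0 + x) * g (s0 + x) \<partial>lborel)"
        by (rule integral_inv[OF lborel_translate _ m]) (intro borel_measurable_continuous_onI continuous_intros)
      also have "\<dots> = (\<integral>x. ?I x * g (s0 + x) \<partial>lborel)"
        by (intro Bochner_Integration.integral_cong refl) (simp add: indicator_def dist_norm)
      finally show ?thesis .
    qed
    have intT: "(\<integral>x. ?I x * T x \<partial>lborel) = V * (g s0 + laplacian g s0 * \<delta> ^ 2 / (2 * (DIM('b) + 2)))"
    proof -
      have eq: "?I x * T x = g s0 * ?I x + (\<Sum>b\<in>Basis. pd g [b] s0 * (?I x * (x \<bullet> b)))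
          + (\<Sum>b\<in>Basis. \<Sum>c\<in>Basis. pd g [c, b] s0 * (?I x * ((x \<bullet> b) * (x \<bullet> c)))) / 2" for x
        by (simp add: T_def algebra_simps sum_distrib_left sum_divide_distrib)
      have i1: "integrable lborel (\<lambda>x. g s0 * ?I x)"
        using integrable_cball[of 0 \<delta> "\<lambda>_. g s0"] by (simp add: mult.commute)
      have i2: "integrable lborel (\<lambda>x. (\<Sum>b\<in>Basis. pd g [b] s0 * (?I x * (x \<bullet> b))))"
        by (intro Bochner_Integration.integrable_sum integrable_mult_right integrable_cball continuous_intros)
      have i3: "integrable lborel (\<lambda>x. (\<Sum>b\<in>Basis. \<Sum>c\<in>Basis. pd g [c, b] s0 * (?I x * ((x \<bullet> b) * (x \<bullet> c)))) / 2)"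
        by (intro integrable_divide Bochner_Integration.integrable_sum integrable_mult_right integrable_cball continuous_intros)
      have s2: "(\<integral>x. (\<Sum>b\<in>Basis. \<Sum>c\<in>Basis. pd g [c, b] s0 * (?I x * ((x \<bullet> b) * (x \<bullet> c)))) \<partial>lborel)
          = (\<Sum>b\<in>Basis. \<Sum>c\<in>Basis. pd g [c, b] s0 * (\<integral>x. ?I x * ((x \<bullet> b) * (x \<bullet> c)) \<partial>lborel))"
        apply (subst Bochner_Integration.integral_sum, intro Bochner_Integration.integrable_sum integrable_mult_right integrable_cball continuous_intros)
        apply (intro sum.cong refl)
        apply (subst Bochner_Integration.integral_sum, intro integrable_mult_right integrable_cball continuous_intros)
        apply simp
        done
      have "(\<integral>x. ?I x * T x \<partial>lborel) = (\<integral>x. g s0 * ?I x + (\<Sum>b\<in>Basis. pd g [b] s0 * (?I x * (x \<bullet> b)))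
          + (\<Sum>b\<in>Basis. \<Sum>c\<in>Basis. pd g [c, b] s0 * (?I x * ((x \<bullet> b) * (x \<bullet> c)))) / 2 \<partial>lborel)"
        by (simp only: eq)
      also have "\<dots> = g s0 * V + (\<Sum>b\<in>Basis. pd g [b] s0 * (\<integral>x. ?I x * (x \<bullet> b) \<partial>lborel))
          + (\<Sum>b\<in>Basis. \<Sum>c\<in>Basis. pd g [c, b] s0 * (\<integral>x. ?I x * ((x \<bullet> b) * (x \<bullet> c)) \<partial>lborel)) / 2"
        apply (subst Bochner_Integration.integral_add[OF Bochner_Integration.integrable_add[OF i1 i2] i3])
        apply (subst Bochner_Integration.integral_add[OF i1 i2])
        apply (subst Bochner_Integration.integral_sum, intro integrable_mult_right integrable_cball continuous_intros)
        apply (simp only: integral_divide_zero s2)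
        apply (simp add: V_def)
        done
      also have "\<dots> = g s0 * V + (\<Sum>b\<in>Basis. pd g [b, b] s0 * (V * \<delta> ^ 2 / (DIM('b) + 2))) / 2"
        using d0 by (simp add: mom1 mom2gen V_def if_distrib sum.delta cong: if_cong)
      also have "\<dots> = V * (g s0 + laplacian g s0 * \<delta> ^ 2 / (2 * (DIM('b) + 2)))"
      proof -
        have "(\<Sum>b\<in>Basis. pd g [b, b] s0 * (V * \<delta> ^ 2 / (DIM('b) + 2))) = laplacian g s0 * (V * \<delta> ^ 2 / (DIM('b) + 2))"
          unfolding laplacian_def by (rule sum_distrib_right[symmetric])
        then show ?thesis by (simp add: field_simps)
      qed
      finally show ?thesis .
    qed
    have intg: "integrable lborel (\<lambda>x. ?I x * g (s0 + x))" by (rule integrable_cball[OF gsh])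
    have intT': "integrable lborel (\<lambda>x. ?I x * T x)"
      unfolding T_def by (intro integrable_cball continuous_intros) auto
    have "\<bar>(\<integral>x. ?I x * g (s0 + x) \<partial>lborel) - (\<integral>x. ?I x * T x \<partial>lborel)\<bar>
          = \<bar>\<integral>x. ?I x * (g (s0 + x) - T x) \<partial>lborel\<bar>"
      using intg intT' by (simp add: right_diff_distrib)
    also have "\<dots> \<le> (\<integral>x. ?I x * (K * \<delta> ^ 3) \<partial>lborel)"
    proof (rule integral_abs_bound_integral)
      show "integrable lborel (\<lambda>x. ?I x * (g (s0 + x) - T x))"
        using Bochner_Integration.integrable_diff[OF intg intT'] by (simp add: right_diff_distrib)
      show "integrable lborel (\<lambda>x. ?I x * (K * \<delta> ^ 3))"
        by (intro integrable_cball continuous_intros)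
      fix x :: 'b
      show "\<bar>?I x * (g (s0 + x) - T x)\<bar> \<le> ?I x * (K * \<delta> ^ 3)"
      proof (cases "x \<in> cball 0 \<delta>")
        case True
        then have nx: "norm x \<le> \<delta>" by simp
        have "\<bar>g (s0 + x) - T x\<bar> \<le> K0 * norm x ^ 3"
          using K0[of x] nx dr by (simp add: T_def algebra_simps)
        also have "\<dots> \<le> K * norm x ^ 3" by (simp add: K_def mult_right_mono)
        also have "\<dots> \<le> K * \<delta> ^ 3" using nx by (intro mult_left_mono power_mono) (auto simp: K_def)
        finally show ?thesis using True by simp
      qed simp
    qed
    also have "\<dots> = V * (K * \<delta> ^ 3)" by (simp add: V_def)
    finally show "\<bar>(\<integral>s. indicator (cball s0 \<delta>) s * g s \<partial>lborel)
        - measure lborel (cball (0::'b) \<delta>) * (g s0 + laplacian g s0 * \<delta> ^ 2 / (2 * (DIM('b) + 2)))\<bar>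
       \<le> K * \<delta> ^ 3 * measure lborel (cball (0::'b) \<delta>)"
      unfolding trans using intT by (simp add: V_def mult_ac)
  qed
qed



lemma abc_expect_ratio:
  fixes f :: "'b::euclidean_space \<Rightarrow> 'a::euclidean_space \<Rightarrow> real"
    and h :: "'a \<Rightarrow> real" and n :: nat
  assumes f_meas: "(\<lambda>(s, t). f s t) \<in> borel_measurable borel"
    and f_nonneg: "\<And>s t. f s t \<ge> 0"
    and f_prob: "prob_space (joint f)"
    and h_meas: "h \<in> borel_measurable borel"
    and h_int: "integrable (joint f) (\<lambda>(s, t). h t)"
    and n_pos: "n \<ge> 1"
    and pos: "0 < (\<integral>s. indicator (cball s0 \<delta>) s * marg_S f s \<partial>lborel)"
  shows "abc_expect f h s0 \<delta> n = (\<integral>s. indicator (cball s0 \<delta>) s * phi f h s \<partial>lborel)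
                                  / (\<integral>s. indicator (cball s0 \<delta>) s * marg_S f s \<partial>lborel)"
proof -
  define A where "A = (\<integral>s. indicator (cball s0 \<delta>) s * marg_S f s \<partial>lborel)"
  define Hb where "Hb = (\<integral>s. indicator (cball s0 \<delta>) s * phi f h s \<partial>lborel)"
  define F where "F p = f (fst p) (snd p)" for p :: "'b \<times> 'a"
  define J where "J = joint f"
  define C where "C = cball s0 \<delta> \<times> (UNIV :: 'a set)"
  have jd: "J = density lborel (\<lambda>p. ennreal (F p))"
    by (simp add: J_def joint_def F_def case_prod_beta')
  have Fm: "F \<in> borel_measurable borel" using f_meas by (simp add: F_def[abs_def] case_prod_beta')
  have Flm: "F \<in> borel_measurable lborel" using Fm by (simp add: measurable_lborel1)
  have Fae: "AE x in lborel. 0 \<le> F x" by (simp add: F_def f_nonneg)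
  have Fem: "(\<lambda>p. ennreal (F p)) \<in> borel_measurable lborel" using Flm by simp
  have sndm: "(snd :: 'b \<times> 'a \<Rightarrow> 'a) \<in> borel_measurable borel"
    by (intro borel_measurable_continuous_onI continuous_intros)
  have hsm: "(\<lambda>p::'b \<times> 'a. h (snd p)) \<in> borel_measurable borel"
    using measurable_compose[OF sndm h_meas] by (simp add: o_def)
  have hslm: "(\<lambda>p::'b \<times> 'a. h (snd p)) \<in> borel_measurable lborel" using hsm by (simp add: measurable_lborel1)
  have Cm: "C \<in> sets borel" unfolding C_def by (intro borel_closed closed_Times) auto
  have intF: "integrable lborel F"
  proof (rule integrableI_nonneg)
    show "F \<in> borel_measurable lborel" by fact
    show "AE x in lborel. 0 \<le> F x" by (simp add: F_def f_nonneg)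
    have "emeasure J (space J) = 1" using f_prob unfolding J_def by (rule prob_space.emeasure_space_1)
    then have "(\<integral>\<^sup>+x. ennreal (F x) * indicator UNIV x \<partial>lborel) = 1"
      using emeasure_density[OF Fem, of UNIV] by (simp add: jd)
    then show "(\<integral>\<^sup>+x. ennreal (F x) \<partial>lborel) < \<infinity>" by simp
  qed
  have intFh: "integrable lborel (\<lambda>p. F p * h (snd p))"
  proof -
    have "integrable J (\<lambda>p. h (snd p))" using h_int by (simp add: J_def case_prod_beta')
    then have "integrable (density lborel (\<lambda>p. ennreal (F p))) (\<lambda>p. h (snd p))" by (simp add: jd)
    then show ?thesis using integrable_density[OF hslm Flm] by (simp add: F_def f_nonneg)
  qed
  have fub: "(\<integral>p. indicator C p * (F p * w (snd p)) \<partial>lborel)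
        = (\<integral>s. indicator (cball s0 \<delta>) s * (\<integral>t. w t * f s t \<partial>lborel) \<partial>lborel)"
    if iw: "integrable lborel (\<lambda>p. F p * w (snd p))" for w :: "'a \<Rightarrow> real"
  proof -
    let ?G = "\<lambda>p. indicator C p * (F p * w (snd p))"
    have iG: "integrable lborel ?G"
      using integrable_mult_indicator[OF _ iw, of C] Cm by simp
    have iG2: "integrable (lborel \<Otimes>\<^sub>M lborel) ?G" using iG by (simp add: lborel_prod)
    have "(\<integral>p. ?G p \<partial>lborel) = (\<integral>p. ?G p \<partial>(lborel \<Otimes>\<^sub>M lborel))" by (simp add: lborel_prod)
    also have "\<dots> = (\<integral>s. (\<integral>t. ?G (s, t) \<partial>lborel) \<partial>lborel)"
      by (rule lborel_pair.integral_fst'[OF iG2, symmetric])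
    also have "\<dots> = (\<integral>s. indicator (cball s0 \<delta>) s * (\<integral>t. w t * f s t \<partial>lborel) \<partial>lborel)"
    proof (intro Bochner_Integration.integral_cong refl)
      fix s :: 'b
      have "(\<integral>t. ?G (s, t) \<partial>lborel) = (\<integral>t. indicator (cball s0 \<delta>) s * (w t * f s t) \<partial>lborel)"
        by (intro Bochner_Integration.integral_cong refl) (simp add: C_def F_def indicator_times mult_ac)
      then show "(\<integral>t. ?G (s, t) \<partial>lborel) = indicator (cball s0 \<delta>) s * (\<integral>t. w t * f s t \<partial>lborel)"
        by simp
    qed
    finally show ?thesis .
  qed
  have A_eq: "(\<integral>p. indicator C p * (F p * 1) \<partial>lborel) = A"
    using fub[of "\<lambda>_. 1"] intF by (simp add: A_def marg_S_def)
  have Hb_eq: "(\<integral>p. indicator C p * (F p * h (snd p)) \<partial>lborel) = Hb"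
    using fub[of h] intFh by (simp add: Hb_def phi_def)
  have eJC: "emeasure J C = ennreal A"
  proof -
    have "emeasure J C = (\<integral>\<^sup>+p. ennreal (F p) * indicator C p \<partial>lborel)"
      using Cm emeasure_density[OF Fem, of C] by (simp add: jd)
    also have "\<dots> = (\<integral>\<^sup>+p. ennreal (indicator C p * (F p * 1)) \<partial>lborel)"
      by (intro nn_integral_cong) (simp add: indicator_def)
    also have "\<dots> = ennreal (\<integral>p. indicator C p * (F p * 1) \<partial>lborel)"
    proof (rule nn_integral_eq_integral)
      show "integrable lborel (\<lambda>p. indicator C p * (F p * 1))"
        using integrable_mult_indicator[OF _ intF, of C] Cm by simp
      show "AE x in lborel. 0 \<le> indicator C x * (F x * 1)" by (simp add: F_def f_nonneg)
    qed
    finally show ?thesis using A_eq by simp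
  qed
  have A0: "A > 0" using pos by (simp add: A_def)
  define U where "U = uniform_measure J C"
  have CC: "{(s, t). norm (s - s0) \<le> \<delta>} = C"
    by (auto simp: C_def dist_norm norm_minus_commute)
  have nu: "abc_accepted f s0 \<delta> = distr U lborel snd"
    by (simp add: abc_accepted_def U_def J_def CC)
  have sU: "sets U = sets (borel :: ('b \<times> 'a) measure)" by (simp add: U_def jd)
  have sndU: "snd \<in> measurable U (lborel :: 'a measure)"
    using sndm by (simp add: measurable_lborel2 measurable_cong_sets[OF sU refl])
  have hlm: "h \<in> borel_measurable (lborel :: 'a measure)" using h_meas by (simp add: measurable_lborel1)
  have pU: "prob_space U" unfolding U_def
    by (rule prob_space_uniform_measure) (use eJC A0 in auto)
  have Ud: "U = density J (\<lambda>p. ennreal (indicator C p / A))"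
  proof -
    have "(\<lambda>p. indicator C p / emeasure J C) = (\<lambda>p. ennreal (indicator C p / A))"
      using A0 by (auto simp: fun_eq_iff eJC indicator_def divide_ennreal[symmetric])
    then show ?thesis by (simp add: U_def uniform_measure_def)
  qed
  have Cind_m: "(\<lambda>p. indicator C p / A) \<in> borel_measurable J"
    using Cm by (simp add: jd measurable_lborel1)
  have hsJ: "(\<lambda>p. h (snd p)) \<in> borel_measurable J" using hsm by (simp add: jd measurable_lborel1)
  have intU: "integrable U (\<lambda>p. h (snd p))"
  proof -
    have "integrable J (\<lambda>p. h (snd p))" using h_int by (simp add: J_def case_prod_beta')
    then have "integrable J (\<lambda>p. indicator C p *\<^sub>R h (snd p))"
      using Cm by (intro integrable_mult_indicator) (simp_all add: jd)
    then have "integrable J (\<lambda>p. (indicator C p / A) *\<^sub>R h (snd p))"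
      using integrable_divide[of J "\<lambda>p. indicator C p *\<^sub>R h (snd p)" A] by simp
    then show ?thesis unfolding Ud
      by (subst integrable_density[OF hsJ Cind_m]) (use A0 in auto)
  qed
  have int_nu: "(\<integral>t. h t \<partial>abc_accepted f s0 \<delta>) = Hb / A"
  proof -
    have "(\<integral>t. h t \<partial>abc_accepted f s0 \<delta>) = (\<integral>p. h (snd p) \<partial>U)"
      unfolding nu by (rule integral_distr[OF sndU hlm])
    also have "\<dots> = (\<integral>p. (indicator C p / A) *\<^sub>R h (snd p) \<partial>J)"
      unfolding Ud by (rule integral_density[OF hsJ Cind_m]) (use A0 in auto)
    also have "\<dots> = (\<integral>p. F p *\<^sub>R ((indicator C p / A) *\<^sub>R h (snd p)) \<partial>lborel)"
      unfolding jd by (rule integral_density) (use Cm hslm Flm Fae in auto)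
    also have "\<dots> = (\<integral>p. indicator C p * (F p * h (snd p)) / A \<partial>lborel)"
      by (intro Bochner_Integration.integral_cong refl) (simp add: field_simps)
    also have "\<dots> = Hb / A" using Hb_eq by simp
    finally show ?thesis .
  qed
  define \<nu> where "\<nu> = abc_accepted f s0 \<delta>"
  have pnu: "prob_space \<nu>" unfolding \<nu>_def nu
    by (rule prob_space.prob_space_distr[OF pU sndU])
  have inu: "integrable \<nu> h" unfolding \<nu>_def nu
    using integrable_distr_eq[OF sndU hlm] intU by simp
  have comp: "distr (PiM {..<n} (\<lambda>_. \<nu>)) \<nu> (\<lambda>x. x j) = \<nu>" if "j < n" for j
    by (rule distr_PiM_component) (use pnu that in auto)
  have compm: "(\<lambda>x. x j) \<in> measurable (PiM {..<n} (\<lambda>_. \<nu>)) \<nu>" if "j < n" for j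
    using measurable_component_singleton[of j "{..<n}" "\<lambda>_. \<nu>"] that by simp
  have hnm: "h \<in> borel_measurable \<nu>" unfolding \<nu>_def nu using hlm by simp
  have ij: "integrable (PiM {..<n} (\<lambda>_. \<nu>)) (\<lambda>x. h (x j))" if "j < n" for j
    using integrable_distr_eq[OF compm[OF that] hnm] comp[OF that] inu by simp
  have ej: "(\<integral>x. h (x j) \<partial>PiM {..<n} (\<lambda>_. \<nu>)) = (\<integral>t. h t \<partial>\<nu>)" if "j < n" for j
    using integral_distr[OF compm[OF that] hnm] comp[OF that] by simp
  have "abc_expect f h s0 \<delta> n = (1 / real n) * (\<Sum>j<n. (\<integral>x. h (x j) \<partial>PiM {..<n} (\<lambda>_. \<nu>)))"
    unfolding abc_expect_def \<nu>_def[symmetric]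
    by (subst integral_mult_right_zero, subst Bochner_Integration.integral_sum) (use ij in auto)
  also have "\<dots> = (1 / real n) * (real n * (\<integral>t. h t \<partial>\<nu>))" using ej by simp
  also have "\<dots> = (\<integral>t. h t \<partial>\<nu>)" using n_pos by simp
  also have "\<dots> = Hb / A" using int_nu by (simp add: \<nu>_def)
  finally show ?thesis by (simp add: Hb_def A_def)
qed



lemma bpos_alg:
  fixes p Bb e2 K2 \<delta> :: real
  assumes p: "p > 0" and d: "0 < \<delta>" "\<delta> \<le> 1" and e2: "\<bar>e2\<bar> \<le> K2 * \<delta> ^ 3"
    and bs: "(\<bar>Bb\<bar> + K2) * \<delta> ^ 2 \<le> p / 2"
  shows "\<bar>Bb * \<delta> ^ 2 + e2\<bar> \<le> p / 2" "p + Bb * \<delta> ^ 2 + e2 \<ge> p / 2"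
proof -
  have K2: "0 \<le> K2"
  proof -
    have "0 \<le> K2 * \<delta> ^ 3" using e2 abs_ge_zero order_trans by blast
    then show ?thesis using d by (simp add: zero_le_mult_iff)
  qed
  have d32: "\<delta> ^ 3 \<le> \<delta> ^ 2" using d by (intro power_decreasing) auto
  have "\<bar>Bb * \<delta> ^ 2 + e2\<bar> \<le> \<bar>Bb\<bar> * \<delta> ^ 2 + K2 * \<delta> ^ 3"
    using e2 abs_triangle_ineq[of "Bb * \<delta> ^ 2" e2] by (simp add: abs_mult)
  also have "\<dots> \<le> \<bar>Bb\<bar> * \<delta> ^ 2 + K2 * \<delta> ^ 2" using K2 d32 by (intro add_left_mono mult_left_mono) auto
  also have "\<dots> = (\<bar>Bb\<bar> + K2) * \<delta> ^ 2" by (simp add: algebra_simps)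
  finally show 1: "\<bar>Bb * \<delta> ^ 2 + e2\<bar> \<le> p / 2" using bs by simp
  then show "p + Bb * \<delta> ^ 2 + e2 \<ge> p / 2" unfolding abs_le_iff by linarith
qed

lemma final_alg:
  fixes p \<phi> Aa Bb e1 e2 K1 K2 \<delta> :: real
  assumes p: "p > 0" and d: "0 < \<delta>" "\<delta> \<le> 1"
    and e1: "\<bar>e1\<bar> \<le> K1 * \<delta> ^ 3" and e2: "\<bar>e2\<bar> \<le> K2 * \<delta> ^ 3"
    and bs: "(\<bar>Bb\<bar> + K2) * \<delta> ^ 2 \<le> p / 2"
  shows "\<bar>(\<phi> + Aa * \<delta> ^ 2 + e1) / (p + Bb * \<delta> ^ 2 + e2) - \<phi> / p - (Aa - (\<phi> / p) * Bb) / p * \<delta> ^ 2\<bar>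
          \<le> (2 * \<bar>Aa - (\<phi> / p) * Bb\<bar> * (\<bar>Bb\<bar> + K2) / p ^ 2 + 2 * (K1 + \<bar>\<phi> / p\<bar> * K2) / p) * \<delta> ^ 3"
proof -
  define y where "y = \<phi> / p"
  define D where "D = Aa - y * Bb"
  define b where "b = p + Bb * \<delta> ^ 2 + e2"
  define E where "E = e1 - y * e2"
  have K2: "0 \<le> K2"
  proof -
    have "0 \<le> K2 * \<delta> ^ 3" using e2 abs_ge_zero order_trans by blast
    then show ?thesis using d by (simp add: zero_le_mult_iff)
  qed
  have bb: "\<bar>Bb * \<delta> ^ 2 + e2\<bar> \<le> (\<bar>Bb\<bar> + K2) * \<delta> ^ 2"
  proof -
    have d32: "\<delta> ^ 3 \<le> \<delta> ^ 2" using d by (intro power_decreasing) auto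
    have "\<bar>Bb * \<delta> ^ 2 + e2\<bar> \<le> \<bar>Bb\<bar> * \<delta> ^ 2 + K2 * \<delta> ^ 3"
      using e2 abs_triangle_ineq[of "Bb * \<delta> ^ 2" e2] by (simp add: abs_mult)
    also have "\<dots> \<le> \<bar>Bb\<bar> * \<delta> ^ 2 + K2 * \<delta> ^ 2" using K2 d32 by (intro add_left_mono mult_left_mono) auto
    finally show ?thesis by (simp add: algebra_simps)
  qed
  have bge: "b \<ge> p / 2" using bpos_alg(2)[OF p d e2 bs] by (simp add: b_def)
  then have b0: "b > 0" using p by simp
  have phi: "\<phi> = y * p" using p by (simp add: y_def)
  have key: "(\<phi> + Aa * \<delta> ^ 2 + e1) / b - y - D / p * \<delta> ^ 2
           = D * \<delta> ^ 2 * (p - b) / (b * p) + E / b"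
  proof -
    have num: "\<phi> + Aa * \<delta> ^ 2 + e1 = y * b + D * \<delta> ^ 2 + E"
      unfolding b_def D_def E_def phi by (simp add: algebra_simps)
    show ?thesis unfolding num using b0 p by (simp add: field_simps)
  qed
  have t1: "\<bar>D * \<delta> ^ 2 * (p - b) / (b * p)\<bar> \<le> 2 * \<bar>D\<bar> * (\<bar>Bb\<bar> + K2) / p ^ 2 * \<delta> ^ 3"
  proof -
    have pb: "\<bar>p - b\<bar> \<le> (\<bar>Bb\<bar> + K2) * \<delta> ^ 2" using bb by (simp add: b_def abs_minus_commute)
    have "\<bar>D * \<delta> ^ 2 * (p - b) / (b * p)\<bar> = \<bar>D\<bar> * \<delta> ^ 2 * \<bar>p - b\<bar> / (b * p)"
      using b0 p by (simp add: abs_mult abs_divide)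
    also have "\<dots> \<le> \<bar>D\<bar> * \<delta> ^ 2 * ((\<bar>Bb\<bar> + K2) * \<delta> ^ 2) / (p / 2 * p)"
    proof (rule frac_le)
      show "0 \<le> \<bar>D\<bar> * \<delta> ^ 2 * ((\<bar>Bb\<bar> + K2) * \<delta> ^ 2)" using K2 by simp
      show "\<bar>D\<bar> * \<delta> ^ 2 * \<bar>p - b\<bar> \<le> \<bar>D\<bar> * \<delta> ^ 2 * ((\<bar>Bb\<bar> + K2) * \<delta> ^ 2)"
        using pb by (intro mult_left_mono) auto
      show "0 < p / 2 * p" using p by simp
      show "p / 2 * p \<le> b * p" using bge p by (intro mult_right_mono) auto
    qed
    also have "\<dots> = 2 * \<bar>D\<bar> * (\<bar>Bb\<bar> + K2) / p ^ 2 * \<delta> ^ 3 * \<delta>"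
      using p by (simp add: field_simps power2_eq_square power3_eq_cube)
    also have "\<dots> \<le> 2 * \<bar>D\<bar> * (\<bar>Bb\<bar> + K2) / p ^ 2 * \<delta> ^ 3 * 1"
      using d K2 p by (intro mult_left_mono) auto
    finally show ?thesis by simp
  qed
  have t2: "\<bar>E / b\<bar> \<le> 2 * (K1 + \<bar>y\<bar> * K2) / p * \<delta> ^ 3"
  proof -
    have Eb: "\<bar>E\<bar> \<le> (K1 + \<bar>y\<bar> * K2) * \<delta> ^ 3"
    proof -
      have "\<bar>E\<bar> \<le> \<bar>e1\<bar> + \<bar>y\<bar> * \<bar>e2\<bar>" unfolding E_def
        using abs_triangle_ineq4[of e1 "y * e2"] by (simp add: abs_mult)
      also have "\<dots> \<le> K1 * \<delta> ^ 3 + \<bar>y\<bar> * (K2 * \<delta> ^ 3)"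
        using e1 e2 by (intro add_mono mult_left_mono) auto
      finally show ?thesis by (simp add: algebra_simps)
    qed
    have "\<bar>E / b\<bar> = \<bar>E\<bar> / b" using b0 by (simp add: abs_divide)
    also have "\<dots> \<le> (K1 + \<bar>y\<bar> * K2) * \<delta> ^ 3 / (p / 2)"
    proof (rule frac_le)
      show "0 \<le> (K1 + \<bar>y\<bar> * K2) * \<delta> ^ 3" using Eb abs_ge_zero order_trans by blast
    qed (use Eb bge p in auto)
    also have "\<dots> = 2 * (K1 + \<bar>y\<bar> * K2) / p * \<delta> ^ 3" using p by (simp add: field_simps)
    finally show ?thesis .
  qed
  have "\<bar>(\<phi> + Aa * \<delta> ^ 2 + e1) / b - y - D / p * \<delta> ^ 2\<bar>
        \<le> 2 * \<bar>D\<bar> * (\<bar>Bb\<bar> + K2) / p ^ 2 * \<delta> ^ 3 + 2 * (K1 + \<bar>y\<bar> * K2) / p * \<delta> ^ 3"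
    unfolding key using t1 t2 abs_triangle_ineq[of "D * \<delta> ^ 2 * (p - b) / (b * p)" "E / b"] by linarith
  then show ?thesis by (simp add: D_def y_def b_def algebra_simps)
qed



lemma post_mean_eq:
  assumes "0 < marg_S f s0"
  shows "post_mean f h s0 = phi f h s0 / marg_S f s0"
proof -
  have "post_mean f h s0 = (\<integral>t. h t * f s0 t / marg_S f s0 \<partial>lborel)"
    unfolding post_mean_def cond_dens_def using assms by simp
  also have "\<dots> = phi f h s0 / marg_S f s0" by (simp add: phi_def)
  finally show ?thesis .
qed

theorem lemma2:
  fixes f :: "'b::euclidean_space \<Rightarrow> 'a::euclidean_space \<Rightarrow> real"
    and h :: "'a \<Rightarrow> real" and n :: nat
  assumes f_meas: "(\<lambda>(s, t). f s t) \<in> borel_measurable borel"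
    and f_nonneg: "\<And>s t. f s t \<ge> 0"
    and f_prob: "prob_space (joint f)"
    and h_meas: "h \<in> borel_measurable borel"
    and h_int: "integrable (joint f) (\<lambda>(s, t). h t)"
    and n_pos: "n \<ge> 1"
  shows "AE s\<^sub>0 in density lborel (\<lambda>s. ennreal (marg_S f s)).
           C3_near (marg_S f) s\<^sub>0 \<and> C3_near (phi f h) s\<^sub>0 \<longrightarrow>
           (\<lambda>\<delta>. abc_bias f h s\<^sub>0 \<delta> n
                - (laplacian (phi f h) s\<^sub>0 - post_mean f h s\<^sub>0 * laplacian (marg_S f) s\<^sub>0)
                  / (2 * (real DIM('b) + 2) * marg_S f s\<^sub>0) * \<delta>\<^sup>2)
             \<in> O[at_right 0](\<lambda>\<delta>. \<delta> ^ 3)"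
proof -
  have fm2: "case_prod f \<in> borel_measurable (lborel \<Otimes>\<^sub>M lborel :: ('b \<times> 'a) measure)"
    using f_meas by (simp add: lborel_prod measurable_lborel1)
  have mm: "(\<lambda>s. marg_S f s) \<in> borel_measurable (lborel :: 'b measure)"
    unfolding marg_S_def by (rule lborel.borel_measurable_lebesgue_integral[OF fm2])
  then have mme: "(\<lambda>s. ennreal (marg_S f s)) \<in> borel_measurable (lborel :: 'b measure)" by simp
  have main: "C3_near (marg_S f) s0 \<and> C3_near (phi f h) s0 \<longrightarrow>
           (\<lambda>\<delta>. abc_bias f h s0 \<delta> n
                - (laplacian (phi f h) s0 - post_mean f h s0 * laplacian (marg_S f) s0)
                  / (2 * (real DIM('b) + 2) * marg_S f s0) * \<delta>\<^sup>2)
             \<in> O[at_right 0](\<lambda>\<delta>. \<delta> ^ 3)" if pos: "0 < marg_S f s0" for s0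
  proof
    assume "C3_near (marg_S f) s0 \<and> C3_near (phi f h) s0"
    then obtain U1 U2 where U1: "open U1" "s0 \<in> U1" "Ck_on 3 (marg_S f) U1"
      and U2: "open U2" "s0 \<in> U2" "Ck_on 3 (phi f h) U2"
      unfolding C3_near_def by blast
    obtain r where r: "r > 0" "cball s0 r \<subseteq> U1 \<inter> U2"
      using open_contains_cball[of "U1 \<inter> U2"] U1 U2 by blast
    obtain K1 where K1: "\<And>\<delta>. 0 < \<delta> \<and> \<delta> \<le> r \<Longrightarrow>
       \<bar>(\<integral>s. indicator (cball s0 \<delta>) s * phi f h s \<partial>lborel)
        - measure lborel (cball (0::'b) \<delta>) * (phi f h s0 + laplacian (phi f h) s0 * \<delta> ^ 2 / (2 * (DIM('b) + 2)))\<bar>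
       \<le> K1 * \<delta> ^ 3 * measure lborel (cball (0::'b) \<delta>)"
      using ball_expansion[OF U2(3) U2(1), of s0 r] r by blast
    obtain K2 where K2: "\<And>\<delta>. 0 < \<delta> \<and> \<delta> \<le> r \<Longrightarrow>
       \<bar>(\<integral>s. indicator (cball s0 \<delta>) s * marg_S f s \<partial>lborel)
        - measure lborel (cball (0::'b) \<delta>) * (marg_S f s0 + laplacian (marg_S f) s0 * \<delta> ^ 2 / (2 * (DIM('b) + 2)))\<bar>
       \<le> K2 * \<delta> ^ 3 * measure lborel (cball (0::'b) \<delta>)"
      using ball_expansion[OF U1(3) U1(1), of s0 r] r by blast
    define p where "p = marg_S f s0"
    define \<phi> where "\<phi> = phi f h s0"
    define q2 where "q2 = 2 * (real DIM('b) + 2)"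
    define Aa where "Aa = laplacian (phi f h) s0 / q2"
    define Bb where "Bb = laplacian (marg_S f) s0 / q2"
    define L1 where "L1 = max K1 0"
    define L2 where "L2 = max K2 0"
    define Kf where "Kf = 2 * \<bar>Aa - (\<phi> / p) * Bb\<bar> * (\<bar>Bb\<bar> + L2) / p ^ 2 + 2 * (L1 + \<bar>\<phi> / p\<bar> * L2) / p"
    define d where "d = min r (min 1 (p / (2 * (\<bar>Bb\<bar> + L2) + 1)))"
    have p0: "p > 0" using pos by (simp add: p_def)
    have L2: "0 \<le> L2" by (simp add: L2_def)
    have q2: "q2 > 0" by (simp add: q2_def)
    have d0: "d > 0" using r p0 L2 by (simp add: d_def)
    have ev: "eventually (\<lambda>\<delta>. norm (abc_bias f h s0 \<delta> n
                - (laplacian (phi f h) s0 - post_mean f h s0 * laplacian (marg_S f) s0)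
                  / (2 * (real DIM('b) + 2) * marg_S f s0) * \<delta>\<^sup>2) \<le> Kf * norm (\<delta> ^ 3)) (at_right 0)"
      using eventually_at_right_real[OF d0]
    proof (rule eventually_mono)
      fix \<delta> :: real assume "\<delta> \<in> {0<..<d}"
      then have d1: "0 < \<delta>" "\<delta> < d" by auto
      then have dr: "\<delta> \<le> r" and dle1: "\<delta> \<le> 1" and dp: "\<delta> < p / (2 * (\<bar>Bb\<bar> + L2) + 1)"
        by (auto simp: d_def)
      define V where "V = measure lborel (cball (0::'b) \<delta>)"
      have V0: "V > 0" using d1 by (simp add: V_def measure_cball')
      define Hb where "Hb = (\<integral>s. indicator (cball s0 \<delta>) s * phi f h s \<partial>lborel)"
      define Am where "Am = (\<integral>s. indicator (cball s0 \<delta>) s * marg_S f s \<partial>lborel)"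
      define e1 where "e1 = Hb / V - \<phi> - Aa * \<delta> ^ 2"
      define e2 where "e2 = Am / V - p - Bb * \<delta> ^ 2"
      have e1b: "\<bar>e1\<bar> \<le> L1 * \<delta> ^ 3"
      proof -
        have "\<bar>Hb - V * (\<phi> + Aa * \<delta> ^ 2)\<bar> \<le> K1 * \<delta> ^ 3 * V"
          using K1[of \<delta>] d1 dr by (simp add: Hb_def V_def \<phi>_def Aa_def q2_def add.commute)
        moreover have "e1 = (Hb - V * (\<phi> + Aa * \<delta> ^ 2)) / V" using V0 by (simp add: e1_def field_simps)
        ultimately have "\<bar>e1\<bar> \<le> K1 * \<delta> ^ 3" using V0 by (simp add: abs_divide divide_le_eq)
        also have "\<dots> \<le> L1 * \<delta> ^ 3" using d1 by (intro mult_right_mono) (auto simp: L1_def)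
        finally show ?thesis .
      qed
      have e2b: "\<bar>e2\<bar> \<le> L2 * \<delta> ^ 3"
      proof -
        have "\<bar>Am - V * (p + Bb * \<delta> ^ 2)\<bar> \<le> K2 * \<delta> ^ 3 * V"
          using K2[of \<delta>] d1 dr by (simp add: Am_def V_def p_def Bb_def q2_def add.commute)
        moreover have "e2 = (Am - V * (p + Bb * \<delta> ^ 2)) / V" using V0 by (simp add: e2_def field_simps)
        ultimately have "\<bar>e2\<bar> \<le> K2 * \<delta> ^ 3" using V0 by (simp add: abs_divide divide_le_eq)
        also have "\<dots> \<le> L2 * \<delta> ^ 3" using d1 by (intro mult_right_mono) (auto simp: L2_def)
        finally show ?thesis .
      qed
      have bs: "(\<bar>Bb\<bar> + L2) * \<delta> ^ 2 \<le> p / 2"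
      proof -
        have "\<delta> ^ 2 \<le> \<delta>" using d1 dle1 by (simp add: power2_eq_square mult_le_cancel_right1)
        then have "(\<bar>Bb\<bar> + L2) * \<delta> ^ 2 \<le> (\<bar>Bb\<bar> + L2) * \<delta>" using L2 by (intro mult_left_mono) auto
        also have "\<dots> \<le> (\<bar>Bb\<bar> + L2) * (p / (2 * (\<bar>Bb\<bar> + L2) + 1))"
          using dp L2 by (intro mult_left_mono) auto
        also have "\<dots> \<le> p / 2"
          using p0 L2 by (simp add: field_simps)
        finally show ?thesis .
      qed
      have bge: "p + Bb * \<delta> ^ 2 + e2 \<ge> p / 2" by (rule bpos_alg(2)[OF p0 d1(1) dle1 e2b bs])
      have Amv: "Am / V = p + Bb * \<delta> ^ 2 + e2" by (simp add: e2_def)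
      have Hbv: "Hb / V = \<phi> + Aa * \<delta> ^ 2 + e1" by (simp add: e1_def)
      have Am0: "Am > 0"
      proof -
        have "Am / V > 0" using Amv bge p0 by simp
        then show ?thesis using V0 by (simp add: zero_less_divide_iff)
      qed
      have ratio: "Hb / Am = (\<phi> + Aa * \<delta> ^ 2 + e1) / (p + Bb * \<delta> ^ 2 + e2)"
        using V0 Am0 unfolding Amv[symmetric] Hbv[symmetric] by (simp add: field_simps)
      have bias: "abc_bias f h s0 \<delta> n = Hb / Am - \<phi> / p"
        unfolding abc_bias_def
        using abc_expect_ratio[OF f_meas f_nonneg f_prob h_meas h_int n_pos, of s0 \<delta>] Am0
          post_mean_eq[OF pos, of h]
        by (simp add: Am_def Hb_def \<phi>_def p_def)
      have coef: "(laplacian (phi f h) s0 - post_mean f h s0 * laplacian (marg_S f) s0)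
                  / (2 * (real DIM('b) + 2) * marg_S f s0) = (Aa - (\<phi> / p) * Bb) / p"
      proof -
        have pm: "post_mean f h s0 = \<phi> / p" using post_mean_eq[OF pos, of h] by (simp add: \<phi>_def p_def)
        have "(laplacian (phi f h) s0 - post_mean f h s0 * laplacian (marg_S f) s0)
                  / (2 * (real DIM('b) + 2) * marg_S f s0)
              = (laplacian (phi f h) s0 - (\<phi> / p) * laplacian (marg_S f) s0) / (q2 * p)"
          by (simp only: pm q2_def p_def)
        also have "\<dots> = (Aa - (\<phi> / p) * Bb) / p"
          using q2 p0 by (simp add: Aa_def Bb_def field_simps)
        finally show ?thesis .
      qed
      have "\<bar>abc_bias f h s0 \<delta> n
                - (laplacian (phi f h) s0 - post_mean f h s0 * laplacian (marg_S f) s0)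
                  / (2 * (real DIM('b) + 2) * marg_S f s0) * \<delta>\<^sup>2\<bar> \<le> Kf * \<delta> ^ 3"
        unfolding bias coef ratio Kf_def by (rule final_alg[OF p0 d1(1) dle1 e1b e2b bs])
      then show "norm (abc_bias f h s0 \<delta> n
                - (laplacian (phi f h) s0 - post_mean f h s0 * laplacian (marg_S f) s0)
                  / (2 * (real DIM('b) + 2) * marg_S f s0) * \<delta>\<^sup>2) \<le> Kf * norm (\<delta> ^ 3)"
        using d1 by simp
    qed
    then show "(\<lambda>\<delta>. abc_bias f h s0 \<delta> n
                - (laplacian (phi f h) s0 - post_mean f h s0 * laplacian (marg_S f) s0)
                  / (2 * (real DIM('b) + 2) * marg_S f s0) * \<delta>\<^sup>2)
             \<in> O[at_right 0](\<lambda>\<delta>. \<delta> ^ 3)"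
      by (rule bigoI)
  qed
  show ?thesis
    unfolding AE_density[OF mme] by (rule AE_I2) (use main in auto)
qed


end
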